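(* Let $\xi,\zeta$ be stoups, $\Pi,\Gamma_1,\Gamma_2$ finite sequences of tree terms, $A,C$ formulae and $\Xi(\cdot)$ a meta-formula context. If the sequents $\xi;\Pi\to A$ and $\Xi(\zeta;\Gamma_1,A,\Gamma_2)\to C$ are derivable in the calculus $\mathcal{M}'_{2015}$ defined below, then the sequent $\Xi(\xi,\zeta;\Gamma_1,\Pi,\Gamma_2)\to C$ is also derivable in $\mathcal{M}'_{2015}$.
   Context: Formulae are built from a countable set of variables and the constant $\mathbf{1}$ by the binary connectives $\backslash$, $/$, $\cdot$, $\wedge$, $\vee$ and the unary connectives $\langle\rangle$, $[]^{-1}$ (bracket modalities) and $!$ (subexponential). A stoup is a finite multiset of formulae ($\varnothing$ is the empty stoup). A tree term is either a formula or an expression $[\Xi]$ with $\Xi$ a meta-formula; a meta-formula is an expression $\zeta;\Gamma$ where $\zeta$ is a stoup and $\Gamma$ is a finite linearly ordered sequence of tree terms (the empty sequence is written $\Lambda$); $\varnothing;\Gamma$ is written simply $\Gamma$. Comma denotes both concatenation of sequences and multiset union of stoups; $\zeta,A$ is $\zeta$ with one more copy of $A$. A sequent is $\Xi\to C$ with $\Xi$ a meta-formula and $C$ a formula. $\Xi(\Theta)$ denotes a meta-formula with a designated occurrence of a meta-formula $\Theta$, which is either $\Xi$ itself or the content of some bracket $[\Theta]$ occurring at any depth in $\Xi$; $\Xi(\Theta')$ is the result of replacing that occurrence by $\Theta'$. Below $A,B,C,D,A_1,A_2$ are formulae, $\Gamma,\Delta,\Delta_i,\Gamma_i$ sequences of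 tree terms, $\zeta,\zeta',\zeta_i$ stoups, $\Xi$ a meta-formula. Common axioms and rules: axioms $A\to A$ and $\Lambda\to\mathbf 1$; ($/L$) from $\zeta_1;\Gamma\to B$ and $\Xi(\zeta_2;\Delta_1,C,\Delta_2)\to D$ infer $\Xi(\zeta_1,\zeta_2;\Delta_1,C/B,\Gamma,\Delta_2)\to D$; ($/R$) from $\zeta;\Gamma,B\to C$ infer $\zeta;\Gamma\to C/B$; ($\backslash L$) from $\zeta_1;\Gamma\to A$ and $\Xi(\zeta_2;\Delta_1,C,\Delta_2)\to D$ infer $\Xi(\zeta_1,\zeta_2;\Delta_1,\Gamma,A\backslash C,\Delta_2)\to D$; ($\backslash R$) from $\zeta;A,\Gamma\to C$ infer $\zeta;\Gamma\to A\backslash C$; ($\cdot L$) from $\Xi(\zeta;\Delta_1,A,B,\Delta_2)\to D$ infer $\Xi(\zeta;\Delta_1,A\cdot B,\Delta_2)\to D$; ($\cdot R$) from $\zeta_1;\Delta\to A$ and $\zeta_2;\Gamma\to B$ infer $\zeta_1,\zeta_2;\Delta,\Gamma\to A\cdot B$; ($\mathbf1 L$) from $\Xi(\zeta;\Delta_1,\Delta_2)\to A$ infer $\Xi(\zeta;\Delta_1,\mathbf1,\Delta_2)\to A$; ($\vee L$) from $\Xi(\zeta;\Delta_1,A_1,\Delta_2)\to C$ and $\Xi(\zeta;\Delta_1,A_2,\Delta_2)\to C$ infer $\Xi(\zeta;\Delta_1,A_1\vee A_2,\Delta_2)\to C$; ($\vee R_i$, $i=1,2$) from $\Xi\to A_i$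 infer $\Xi\to A_1\vee A_2$; ($\wedge L_i$) from $\Xi(\zeta;\Delta_1,A_i,\Delta_2)\to C$ infer $\Xi(\zeta;\Delta_1,A_1\wedge A_2,\Delta_2)\to C$; ($\wedge R$) from $\Xi\to A_1$ and $\Xi\to A_2$ infer $\Xi\to A_1\wedge A_2$; ($[]^{-1}L$) from $\Xi(\zeta;\Delta_1,A,\Delta_2)\to B$ infer $\Xi(\zeta;\Delta_1,[[]^{-1}A],\Delta_2)\to B$; ($[]^{-1}R$) from $[\Xi]\to A$ infer $\Xi\to []^{-1}A$; ($\langle\rangle L$) from $\Xi(\zeta;\Delta_1,[A],\Delta_2)\to B$ infer $\Xi(\zeta;\Delta_1,\langle\rangle A,\Delta_2)\to B$; ($\langle\rangle R$) from $\Xi\to A$ infer $[\Xi]\to\langle\rangle A$; ($!L$) from $\Xi(\zeta,A;\Gamma_1,\Gamma_2)\to B$ infer $\Xi(\zeta;\Gamma_1,!A,\Gamma_2)\to B$; ($!P$) from $\Xi(\zeta;\Gamma_1,A,\Gamma_2)\to B$ infer $\Xi(\zeta,A;\Gamma_1,\Gamma_2)\to B$. The calculus $\mathcal{M}'_{2015}$ consists of the common axioms and rules together with ($!R'$) from $\zeta;\Lambda\to B$ infer $\zeta;\Lambda\to !B$, provided $\zeta\neq\varnothing$, and ($!C'$) from $\Xi(\zeta_1,\zeta_2;\Gamma_1,[\zeta',\zeta_2;\Gamma_2],\Gamma_3)\to C$ infer $\Xi(\zeta_1,\zeta_2,\zeta';\Gamma_1,\Gamma_2,\Gamma_3)\to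 C$, provided $\zeta_2\neq\varnothing$. Cut is not a rule of the calculus; "derivable" means derivable by the listed axioms and rules. *)

theory Defs
  imports "HOL-Library.Multiset"
begin

datatype fm =
    Var nat
  | One
  | LDiv fm fm   (* LDiv A C  =  A \ C *)
  | RDiv fm fm   (* RDiv C B  =  C / B *)
  | Prod fm fm
  | Conj fm fm
  | Disj fm fm
  | Diam fm
  | BoxInv fm
  | Bang fm

text \<open>Tree terms and meta-formulae (stoup = multiset of formulae; sequence = list).\<close>
datatype tree = TF fm | Br meta
     and meta = Meta "fm multiset" "tree list"

text \<open>Contexts Xi(.): the hole is either the whole meta-formula or the content
  of a bracket at any depth.\<close>
datatype ctx = Hole | In "fm multiset" "tree list" ctx "tree list"

fun fill :: "ctx \<Rightarrow> meta \<Rightarrow> meta" where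
  "fill Hole T = T"
| "fill (In z G1 X G2) T = Meta z (G1 @ [Br (fill X T)] @ G2)"

inductive deriv :: "meta \<Rightarrow> fm \<Rightarrow> bool" where
  ax: "deriv (Meta {#} [TF A]) A"
| oneR: "deriv (Meta {#} []) One"
| rdivL: "\<lbrakk> deriv (Meta z1 G) B; deriv (fill X (Meta z2 (D1 @ [TF C] @ D2))) D \<rbrakk>
     \<Longrightarrow> deriv (fill X (Meta (z1 + z2) (D1 @ [TF (RDiv C B)] @ G @ D2))) D"
| rdivR: "deriv (Meta z (G @ [TF B])) C \<Longrightarrow> deriv (Meta z G) (RDiv C B)"
| ldivL: "\<lbrakk> deriv (Meta z1 G) A; deriv (fill X (Meta z2 (D1 @ [TF C] @ D2))) D \<rbrakk>
     \<Longrightarrow> deriv (fill X (Meta (z1 + z2) (D1 @ G @ [TF (LDiv A C)] @ D2))) D"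
| ldivR: "deriv (Meta z (TF A # G)) C \<Longrightarrow> deriv (Meta z G) (LDiv A C)"
| prodL: "deriv (fill X (Meta z (D1 @ [TF A, TF B] @ D2))) D
     \<Longrightarrow> deriv (fill X (Meta z (D1 @ [TF (Prod A B)] @ D2))) D"
| prodR: "\<lbrakk> deriv (Meta z1 D) A; deriv (Meta z2 G) B \<rbrakk>
     \<Longrightarrow> deriv (Meta (z1 + z2) (D @ G)) (Prod A B)"
| oneL: "deriv (fill X (Meta z (D1 @ D2))) A
     \<Longrightarrow> deriv (fill X (Meta z (D1 @ [TF One] @ D2))) A"
| disjL: "\<lbrakk> deriv (fill X (Meta z (D1 @ [TF A1] @ D2))) C;
            deriv (fill X (Meta z (D1 @ [TF A2] @ D2))) C \<rbrakk>
     \<Longrightarrow> deriv (fill X (Meta z (D1 @ [TF (Disj A1 A2)] @ D2))) C"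
| disjR1: "deriv M A1 \<Longrightarrow> deriv M (Disj A1 A2)"
| disjR2: "deriv M A2 \<Longrightarrow> deriv M (Disj A1 A2)"
| conjL1: "deriv (fill X (Meta z (D1 @ [TF A1] @ D2))) C
     \<Longrightarrow> deriv (fill X (Meta z (D1 @ [TF (Conj A1 A2)] @ D2))) C"
| conjL2: "deriv (fill X (Meta z (D1 @ [TF A2] @ D2))) C
     \<Longrightarrow> deriv (fill X (Meta z (D1 @ [TF (Conj A1 A2)] @ D2))) C"
| conjR: "\<lbrakk> deriv M A1; deriv M A2 \<rbrakk> \<Longrightarrow> deriv M (Conj A1 A2)"
| boxinvL: "deriv (fill X (Meta z (D1 @ [TF A] @ D2))) B
     \<Longrightarrow> deriv (fill X (Meta z (D1 @ [Br (Meta {#} [TF (BoxInv A)])] @ D2))) B"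
| boxinvR: "deriv (Meta {#} [Br M]) A \<Longrightarrow> deriv M (BoxInv A)"
| diamL: "deriv (fill X (Meta z (D1 @ [Br (Meta {#} [TF A])] @ D2))) B
     \<Longrightarrow> deriv (fill X (Meta z (D1 @ [TF (Diam A)] @ D2))) B"
| diamR: "deriv M A \<Longrightarrow> deriv (Meta {#} [Br M]) (Diam A)"
| bangL: "deriv (fill X (Meta (z + {#A#}) (G1 @ G2))) B
     \<Longrightarrow> deriv (fill X (Meta z (G1 @ [TF (Bang A)] @ G2))) B"
| bangP: "deriv (fill X (Meta z (G1 @ [TF A] @ G2))) B
     \<Longrightarrow> deriv (fill X (Meta (z + {#A#}) (G1 @ G2))) B"
| bangR': "\<lbrakk> deriv (Meta z []) B; z \<noteq> {#} \<rbrakk> \<Longrightarrow> deriv (Meta z []) (Bang B)"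
| bangC': "\<lbrakk> deriv (fill X (Meta (z1 + z2) (G1 @ [Br (Meta (z' + z2) G2)] @ G3))) C; z2 \<noteq> {#} \<rbrakk>
     \<Longrightarrow> deriv (fill X (Meta (z1 + z2 + z') (G1 @ G2 @ G3))) C"

end

theory Submission
  imports Defs
begin



inductive replM :: "fm \<Rightarrow> fm multiset \<Rightarrow> tree list \<Rightarrow> meta \<Rightarrow> meta \<Rightarrow> bool"
  and replE :: "fm \<Rightarrow> fm multiset \<Rightarrow> tree list \<Rightarrow> tree \<Rightarrow> fm multiset \<Rightarrow> tree list \<Rightarrow> bool"
  for A :: fm and xi :: "fm multiset" and Pi :: "tree list" where
  rE_here: "replE A xi Pi (TF A) xi Pi"
| rE_br: "replM A xi Pi M M' \<Longrightarrow> replE A xi Pi (Br M) {#} [Br M']"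
| rM: "replE A xi Pi t e T \<Longrightarrow> replM A xi Pi (Meta z (S1 @ [t] @ S2)) (Meta (e + z) (S1 @ T @ S2))"

lemma rM': "replE A xi Pi t e T \<Longrightarrow> replM A xi Pi (Meta z (S1 @ t # S2)) (Meta (e + z) (S1 @ T @ S2))"
  using rM by fastforce

lemma rM0: "replM A xi Pi M M' \<Longrightarrow> replM A xi Pi (Meta z (S1 @ [Br M] @ S2)) (Meta z (S1 @ [Br M'] @ S2))"
  using rM[OF rE_br, of A xi Pi M M' z S1 S2] by simp

lemma fill_repl: "replM A xi Pi (fill X (Meta z (G1 @ [TF A] @ G2))) (fill X (Meta (xi + z) (G1 @ Pi @ G2)))"
proof (induction X)
  case Hole
  show ?case using rM[OF rE_here[of A xi Pi], of z G1 G2] by simp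
next
  case (In x1 x2 X x4)
  show ?case using rM0[OF In] by simp
qed

lemma repl_fill:
  "replM A xi Pi M M' \<Longrightarrow> \<exists>X z G1 G2. M = fill X (Meta z (G1@[TF A]@G2)) \<and> M' = fill X (Meta (xi+z) (G1@Pi@G2))"
  "replE A xi Pi t e T \<Longrightarrow> (t = TF A \<and> e = xi \<and> T = Pi) \<or> (\<exists>X z G1 G2. e = {#} \<and> t = Br (fill X (Meta z (G1@[TF A]@G2))) \<and> T = [Br (fill X (Meta (xi+z) (G1@Pi@G2)))])"
proof (induction rule: replM_replE.inducts)
  case (rE_here)
  then show ?case by simp
next
  case (rE_br M M')
  then show ?case by blast
next
  case (rM t e T z S1 S2)
  note ih = rM.IH(2)
  show ?case
  proof (rule disjE[OF ih])
    assume "t = TF A \<and> e = xi \<and> T = Pi"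
    then show ?thesis by (intro exI[of _ Hole]) auto
  next
    assume "\<exists>X z G1 G2. e = {#} \<and> t = Br (fill X (Meta z (G1@[TF A]@G2))) \<and> T = [Br (fill X (Meta (xi+z) (G1@Pi@G2)))]"
    then obtain X z' G1 G2 where h: "e = {#}" "t = Br (fill X (Meta z' (G1@[TF A]@G2)))" "T = [Br (fill X (Meta (xi+z') (G1@Pi@G2)))]" by blast
    show ?thesis using h by (intro exI[of _ "In z S1 X S2"]) auto
  qed
qed

fun comp :: "ctx \<Rightarrow> ctx \<Rightarrow> ctx" where
  "comp Hole Y = Y"
| "comp (In z G1 X G2) Y = In z G1 (comp X Y) G2"

lemma fill_comp: "fill (comp X Y) M = fill X (fill Y M)"
  by (induction X) auto

definition replT where
  "replT A xi Pi S e S' \<longleftrightarrow> (\<exists>S1 t S2 T. S = S1@[t]@S2 \<and> replE A xi Pi t e T \<and> S' = S1@T@S2)"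

lemma replM_Meta: "replM A xi Pi (Meta z S) N \<longleftrightarrow> (\<exists>e S'. replT A xi Pi S e S' \<and> N = Meta (e+z) S')"
proof
  assume "replM A xi Pi (Meta z S) N"
  then show "\<exists>e S'. replT A xi Pi S e S' \<and> N = Meta (e+z) S'"
    by cases (auto simp: replT_def)
next
  show "\<exists>e S'. replT A xi Pi S e S' \<and> N = Meta (e+z) S' \<Longrightarrow> replM A xi Pi (Meta z S) N"
    unfolding replT_def using rM by blast
qed

lemma split3: "S1@[t]@S2 = xs@ys \<Longrightarrow> (\<exists>R. xs = S1@t#R \<and> S2 = R@ys) \<or> (\<exists>R. ys = R@t#S2 \<and> S1 = xs@R)"
  by (auto simp: append_eq_append_conv2 Cons_eq_append_conv)

lemma replT_append: "replT A xi Pi (xs@ys) e L \<Longrightarrow>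
   (\<exists>xs'. replT A xi Pi xs e xs' \<and> L = xs'@ys) \<or> (\<exists>ys'. replT A xi Pi ys e ys' \<and> L = xs@ys')"
  unfolding replT_def
  apply (elim exE conjE)
  apply (drule split3[OF sym])
  apply (elim disjE exE conjE)
   apply (rule disjI1) apply force
  apply (rule disjI2) apply force
  done

lemma replT_append3: "replT A xi Pi (xs@ys@zs) e L \<Longrightarrow>
   (\<exists>xs'. replT A xi Pi xs e xs' \<and> L = xs'@ys@zs) \<or> (\<exists>ys'. replT A xi Pi ys e ys' \<and> L = xs@ys'@zs)
  \<or> (\<exists>zs'. replT A xi Pi zs e zs' \<and> L = xs@ys@zs')"
  by (blast dest: replT_append)

lemma replT_appL: "replT A xi Pi xs e xs' \<Longrightarrow> replT A xi Pi (xs@ys) e (xs'@ys)"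
  unfolding replT_def by force
lemma replT_appR: "replT A xi Pi ys e ys' \<Longrightarrow> replT A xi Pi (xs@ys) e (xs@ys')"
  unfolding replT_def by (metis append.assoc)

lemma replT_Nil: "\<not> replT A xi Pi [] e L"
  unfolding replT_def by auto

lemma replT_single: "replT A xi Pi [t] e L \<longleftrightarrow> replE A xi Pi t e L"
  unfolding replT_def by (auto simp: Cons_eq_append_conv)

lemma replE_TF: "replE A xi Pi (TF F) e L \<longleftrightarrow> F = A \<and> e = xi \<and> L = Pi"
  by (auto elim: replE.cases intro: rE_here)

lemma replE_Br: "replE A xi Pi (Br M) e L \<longleftrightarrow> e = {#} \<and> (\<exists>M'. L = [Br M'] \<and> replM A xi Pi M M')"
  by (auto elim: replE.cases intro: rE_br)




lemma replM_app_uniform: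
  "replT A xi Pi D1 e D1' \<Longrightarrow> replM A xi Pi (Meta w0 (D1@S0@D2)) (Meta (e+w0) (D1'@S0@D2))"
  by (metis replM_Meta replT_appL append.assoc)

lemma replM_app_uniform2:
  "replT A xi Pi D2 e D2' \<Longrightarrow> replM A xi Pi (Meta w0 (D1@S0@D2)) (Meta (e+w0) (D1@S0@D2'))"
  by (metis replM_Meta replT_appR)

lemma frame:
  "replM A xi Pi (fill Y (Meta w (D1@S@D2))) N \<Longrightarrow>
  (\<exists>Y' e D1' D2'. N = fill Y' (Meta (e+w) (D1'@S@D2')) \<and>
     (\<forall>S0 w0. replM A xi Pi (fill Y (Meta w0 (D1@S0@D2))) (fill Y' (Meta (e+w0) (D1'@S0@D2'))))) \<or>
  (\<exists>e S'. replT A xi Pi S e S' \<and> N = fill Y (Meta (e+w) (D1@S'@D2)))"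
proof (induction Y arbitrary: N)
  case Hole
  then obtain e L where L: "replT A xi Pi (D1@S@D2) e L" "N = Meta (e+w) L"
    by (auto simp: replM_Meta)
  from replT_append3[OF L(1)] show ?case
  proof (elim disjE exE conjE)
    fix xs' assume "replT A xi Pi D1 e xs'" "L = xs' @ S @ D2"
    then have "N = fill Hole (Meta (e+w) (xs'@S@D2)) \<and> (\<forall>S0 w0. replM A xi Pi (fill Hole (Meta w0 (D1@S0@D2))) (fill Hole (Meta (e+w0) (xs'@S0@D2))))"
      using L(2) by (auto intro: replM_app_uniform)
    then show ?thesis by blast
  next
    fix ys' assume "replT A xi Pi S e ys'" "L = D1 @ ys' @ D2"
    then show ?thesis using L(2) by auto
  next
    fix zs' assume "replT A xi Pi D2 e zs'" "L = D1 @ S @ zs'"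
    then have "N = fill Hole (Meta (e+w) (D1@S@zs')) \<and> (\<forall>S0 w0. replM A xi Pi (fill Hole (Meta w0 (D1@S0@D2))) (fill Hole (Meta (e+w0) (D1@S0@zs'))))"
      using L(2) by (auto intro: replM_app_uniform2)
    then show ?thesis by blast
  qed
next
  case (In u E1 Y0 E2)
  let ?F = "fill Y0 (Meta w (D1@S@D2))"
  from In.prems obtain e L where L: "replT A xi Pi (E1@[Br ?F]@E2) e L" "N = Meta (e+u) L"
    by (auto simp: replM_Meta)
  from replT_append3[OF L(1)] show ?case
  proof (elim disjE exE conjE)
    fix xs' assume h: "replT A xi Pi E1 e xs'" "L = xs' @ [Br ?F] @ E2"
    show ?thesis
    proof (rule disjI1, rule exI[of _ "In (e+u) xs' Y0 E2"], rule exI[of _ "{#}"], rule exI[of _ D1], rule exI[of _ D2], intro conjI allI)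
      show "N = fill (In (e + u) xs' Y0 E2) (Meta ({#} + w) (D1 @ S @ D2))" using h L(2) by simp
      fix S0 w0
      show "replM A xi Pi (fill (In u E1 Y0 E2) (Meta w0 (D1 @ S0 @ D2)))
          (fill (In (e + u) xs' Y0 E2) (Meta ({#} + w0) (D1 @ S0 @ D2)))"
        using replM_app_uniform[OF h(1), of u "[Br (fill Y0 (Meta w0 (D1 @ S0 @ D2)))]" E2] by simp
    qed
  next
    fix zs' assume h: "replT A xi Pi E2 e zs'" "L = E1 @ [Br ?F] @ zs'"
    show ?thesis
    proof (rule disjI1, rule exI[of _ "In (e+u) E1 Y0 zs'"], rule exI[of _ "{#}"], rule exI[of _ D1], rule exI[of _ D2], intro conjI allI)
      show "N = fill (In (e + u) E1 Y0 zs') (Meta ({#} + w) (D1 @ S @ D2))" using h L(2) by simp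
      fix S0 w0
      show "replM A xi Pi (fill (In u E1 Y0 E2) (Meta w0 (D1 @ S0 @ D2)))
          (fill (In (e + u) E1 Y0 zs') (Meta ({#} + w0) (D1 @ S0 @ D2)))"
        using replM_app_uniform2[OF h(1), of u E1 "[Br (fill Y0 (Meta w0 (D1 @ S0 @ D2)))]"] by simp
    qed
  next
    fix ys' assume h: "replT A xi Pi [Br ?F] e ys'" "L = E1 @ ys' @ E2"
    then obtain F' where F': "e = {#}" "ys' = [Br F']" "replM A xi Pi ?F F'"
      by (auto simp: replT_single replE_Br)
    from In.IH[OF F'(3)] show ?thesis
    proof (elim disjE exE conjE)
      fix Y' e' D1' D2'
      assume a: "F' = fill Y' (Meta (e' + w) (D1' @ S @ D2'))"
        "\<forall>S0 w0. replM A xi Pi (fill Y0 (Meta w0 (D1 @ S0 @ D2))) (fill Y' (Meta (e' + w0) (D1' @ S0 @ D2')))"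
      show ?thesis
      proof (rule disjI1, rule exI[of _ "In u E1 Y' E2"], rule exI[of _ e'], rule exI[of _ D1'], rule exI[of _ D2'], intro conjI allI)
        show "N = fill (In u E1 Y' E2) (Meta (e' + w) (D1' @ S @ D2'))" using a(1) F' h L(2) by simp
        fix S0 w0
        show "replM A xi Pi (fill (In u E1 Y0 E2) (Meta w0 (D1 @ S0 @ D2)))
          (fill (In u E1 Y' E2) (Meta (e' + w0) (D1' @ S0 @ D2')))"
          using rM0[OF a(2)[rule_format, of w0 S0], of u E1 E2] by simp
      qed
    next
      fix e' S'
      assume a: "replT A xi Pi S e' S'" "F' = fill Y0 (Meta (e' + w) (D1 @ S' @ D2))"
      show ?thesis using a F' h L(2) by (intro disjI2 exI[of _ e'] exI[of _ S']) auto
    qed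
  qed
qed

lemma plug:
  assumes r: "replM F xi Pi M M'" and eq: "Meta xi Pi = fill X (Meta w (D1@S@D2))"
  shows "\<exists>Y e D1' D2'. M' = fill Y (Meta (e+w) (D1'@S@D2')) \<and>
    (\<forall>w0 S0 xi0 Pi0. Meta xi0 Pi0 = fill X (Meta w0 (D1@S0@D2)) \<longrightarrow>
        replM F xi0 Pi0 M (fill Y (Meta (e+w0) (D1'@S0@D2'))))"
proof -
  obtain Xc zc Gc1 Gc2 where c: "M = fill Xc (Meta zc (Gc1@[TF F]@Gc2))" "M' = fill Xc (Meta (xi+zc) (Gc1@Pi@Gc2))"
    using repl_fill(1)[OF r] by blast
  show ?thesis
  proof (cases X)
    case Hole
    then have xp: "xi = w" "Pi = D1@S@D2" using eq by auto
    show ?thesis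
    proof (rule exI[of _ Xc], rule exI[of _ zc], rule exI[of _ "Gc1@D1"], rule exI[of _ "D2@Gc2"], intro conjI allI impI)
      show "M' = fill Xc (Meta (zc + w) ((Gc1 @ D1) @ S @ D2 @ Gc2))" using c xp by (simp add: add.commute)
      fix w0 S0 xi0 Pi0 assume "Meta xi0 Pi0 = fill X (Meta w0 (D1 @ S0 @ D2))"
      then have "xi0 = w0" "Pi0 = D1@S0@D2" using Hole by auto
      then show "replM F xi0 Pi0 M (fill Xc (Meta (zc + w0) ((Gc1 @ D1) @ S0 @ D2 @ Gc2)))"
        using fill_repl[of F xi0 Pi0 Xc zc Gc1 Gc2] c by (simp add: add.commute)
    qed
  next
    case (In u E1 X0 E2)
    then have xp: "xi = u" "Pi = E1@[Br (fill X0 (Meta w (D1@S@D2)))]@E2" using eq by auto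
    show ?thesis
    proof (rule exI[of _ "comp Xc (In (u+zc) (Gc1@E1) X0 (E2@Gc2))"], rule exI[of _ "{#}"], rule exI[of _ D1], rule exI[of _ D2], intro conjI allI impI)
      show "M' = fill (comp Xc (In (u + zc) (Gc1 @ E1) X0 (E2 @ Gc2))) (Meta ({#} + w) (D1 @ S @ D2))"
        using c xp by (simp add: fill_comp)
      fix w0 S0 xi0 Pi0 assume "Meta xi0 Pi0 = fill X (Meta w0 (D1 @ S0 @ D2))"
      then have "xi0 = u" "Pi0 = E1@[Br (fill X0 (Meta w0 (D1@S0@D2)))]@E2" using In by auto
      then show "replM F xi0 Pi0 M (fill (comp Xc (In (u + zc) (Gc1 @ E1) X0 (E2 @ Gc2))) (Meta ({#} + w0) (D1 @ S0 @ D2)))"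
        using fill_repl[of F xi0 Pi0 Xc zc Gc1 Gc2] c by (simp add: fill_comp)
    qed
  qed
qed




definition sw :: "fm \<Rightarrow> fm multiset \<Rightarrow> fm multiset \<Rightarrow> fm multiset \<Rightarrow> bool" where
  "sw B xi z z' \<longleftrightarrow> (\<exists>k zr. z = zr + replicate_mset k B \<and> z' = zr + repeat_mset k xi)"

lemma replicate_mset_plus: "replicate_mset (m+n) x = replicate_mset m x + replicate_mset n x"
  by (induction m) auto

lemma sw_refl: "sw B xi z z"
  unfolding sw_def by (rule exI[of _ 0]) auto

lemma sw_add: "sw B xi a a' \<Longrightarrow> sw B xi b b' \<Longrightarrow> sw B xi (a+b) (a'+b')"
  unfolding sw_def
proof (elim exE conjE)
  fix k1 r1 k2 r2
  assume h: "a = r1 + replicate_mset k1 B" "a' = r1 + repeat_mset k1 xi"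
    "b = r2 + replicate_mset k2 B" "b' = r2 + repeat_mset k2 xi"
  show "\<exists>k zr. a + b = zr + replicate_mset k B \<and> a' + b' = zr + repeat_mset k xi"
    by (rule exI[of _ "k1+k2"], rule exI[of _ "r1+r2"])
       (simp add: h repeat_mset_distrib replicate_mset_plus ac_simps)
qed

lemma sw_one: "sw B xi {#B#} xi"
  unfolding sw_def by (rule exI[of _ 1], rule exI[of _ "{#}"]) auto

lemma sw_split: "sw B xi (a+b) w \<Longrightarrow> \<exists>a' b'. w = a'+b' \<and> sw B xi a a' \<and> sw B xi b b'"
proof -
  assume "sw B xi (a+b) w"
  then obtain k zr where h: "a + b = zr + replicate_mset k B" "w = zr + repeat_mset k xi"
    unfolding sw_def by blast
  define ka where "ka = min (count a B) k"
  define kb where "kb = k - ka"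
  have cnt: "count a B + count b B = count zr B + k" using arg_cong[OF h(1), of "\<lambda>m. count m B"] by simp
  have kb_le: "kb \<le> count b B" using cnt unfolding kb_def ka_def by auto
  have ka_le: "ka \<le> count a B" unfolding ka_def by auto
  define ar where "ar = a - replicate_mset ka B"
  define br where "br = b - replicate_mset kb B"
  have a: "a = ar + replicate_mset ka B" unfolding ar_def using ka_le
    by (simp add: count_le_replicate_mset_subset_eq)
  have b: "b = br + replicate_mset kb B" unfolding br_def using kb_le
    by (simp add: count_le_replicate_mset_subset_eq)
  have k: "k = ka + kb" unfolding kb_def ka_def by auto
  have "ar + br + replicate_mset k B = zr + replicate_mset k B"
    using h(1) a b k by (metis add.assoc add.commute replicate_mset_plus)
  then have zr: "zr = ar + br" by simp
  show ?thesis
    unfolding sw_def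
    apply (rule exI[of _ "ar + repeat_mset ka xi"], rule exI[of _ "br + repeat_mset kb xi"])
    apply (intro conjI)
      apply (simp add: h(2) zr k repeat_mset_distrib ac_simps)
     apply (rule exI[of _ ka], rule exI[of _ ar], simp add: a)
    apply (rule exI[of _ kb], rule exI[of _ br], simp add: b)
    done
qed

lemma sw_empty: "sw B xi {#} w \<Longrightarrow> w = {#}"
  unfolding sw_def by auto

lemma sw_single: "sw B xi {#F#} w \<Longrightarrow> w = {#F#} \<or> (F = B \<and> w = xi)"
  unfolding sw_def
proof (elim exE conjE)
  fix k zr assume h: "{#F#} = zr + replicate_mset k B" "w = zr + repeat_mset k xi"
  have "size {#F#} = size zr + k" using arg_cong[OF h(1), of size] by simp
  then have "(zr = {#F#} \<and> k = 0) \<or> (zr = {#} \<and> k = 1)"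
    using h(1) by (cases k) (auto simp: size_1_singleton_mset)
  then show "w = {#F#} \<or> (F = B \<and> w = xi)" using h by auto
qed

lemma sw_ne: "xi \<noteq> {#} \<Longrightarrow> sw B xi a a' \<Longrightarrow> a \<noteq> {#} \<Longrightarrow> a' \<noteq> {#}"
  unfolding sw_def by (auto simp: repeat_mset_eq_empty_iff)

inductive srm :: "fm \<Rightarrow> fm multiset \<Rightarrow> meta \<Rightarrow> meta \<Rightarrow> bool"
  and srt :: "fm \<Rightarrow> fm multiset \<Rightarrow> tree \<Rightarrow> tree \<Rightarrow> bool"
  for B :: fm and xi :: "fm multiset" where
  srM: "sw B xi z z' \<Longrightarrow> list_all2 (srt B xi) G G' \<Longrightarrow> srm B xi (Meta z G) (Meta z' G')"
| srTF: "srt B xi (TF F) (TF F)"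
| srBr: "srm B xi M M' \<Longrightarrow> srt B xi (Br M) (Br M')"
monos list_all2_mono

fun src :: "fm \<Rightarrow> fm multiset \<Rightarrow> ctx \<Rightarrow> ctx \<Rightarrow> bool" where
  "src B xi Hole Hole = True"
| "src B xi (In z G1 X G2) (In z' G1' X' G2') = (sw B xi z z' \<and> list_all2 (srt B xi) G1 G1' \<and> src B xi X X' \<and> list_all2 (srt B xi) G2 G2')"
| "src B xi _ _ = False"

lemma srm_Meta: "srm B xi (Meta z G) N \<longleftrightarrow> (\<exists>z' G'. N = Meta z' G' \<and> sw B xi z z' \<and> list_all2 (srt B xi) G G')"
  by (auto elim: srm.cases intro: srM)

lemma srt_TF: "srt B xi (TF F) t \<longleftrightarrow> t = TF F"
  by (auto elim: srt.cases intro: srTF)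

lemma srt_Br: "srt B xi (Br M) t \<longleftrightarrow> (\<exists>M'. t = Br M' \<and> srm B xi M M')"
  by (auto elim: srt.cases intro: srBr)

lemma sr_refl: "srm B xi M M" "srt B xi t t"
proof (induction M and t)
  case (Meta x1 x2)
  then show ?case by (auto intro!: srM sw_refl simp: list_all2_same)
qed (auto intro: srTF srBr)

lemma sr_list_refl: "list_all2 (srt B xi) G G"
  by (simp add: list_all2_same sr_refl)

lemma src_refl: "src B xi X X"
  by (induction X) (auto simp: sw_refl sr_list_refl)

lemma sr_fill: "src B xi Y Y' \<Longrightarrow> srm B xi M M' \<Longrightarrow> srm B xi (fill Y M) (fill Y' M')"
proof (induction Y arbitrary: Y')
  case Hole
  then show ?case by (cases Y') auto
next
  case (In z G1 X G2)
  then show ?case by (cases Y') (auto intro!: srM srBr list_all2_appendI)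
qed

lemma sr_fill_inv: "srm B xi (fill Y M) N \<Longrightarrow> \<exists>Y' M'. N = fill Y' M' \<and> src B xi Y Y' \<and> srm B xi M M'"
proof (induction Y arbitrary: N)
  case Hole
  then show ?case by (intro exI[of _ Hole]) auto
next
  case (In z G1 X G2)
  from In.prems obtain z' L where L: "N = Meta z' L" "sw B xi z z'" "list_all2 (srt B xi) (G1 @ [Br (fill X M)] @ G2) L"
    by (auto simp: srm_Meta)
  from L(3) obtain G1' t G2' where t: "L = G1' @ [t] @ G2'" "list_all2 (srt B xi) G1 G1'" "srt B xi (Br (fill X M)) t" "list_all2 (srt B xi) G2 G2'"
    by (auto simp: list_all2_append1 list_all2_Cons1)
  from t(3) obtain F' where F': "t = Br F'" "srm B xi (fill X M) F'" by (auto simp: srt_Br)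
  from In.IH[OF F'(2)] obtain Y' M' where "F' = fill Y' M'" "src B xi X Y'" "srm B xi M M'" by blast
  then show ?case using L t F' by (intro exI[of _ "In z' G1' Y' G2'"] exI[of _ M']) auto
qed

lemma la_split3: "list_all2 P (a@b@c) L \<Longrightarrow> \<exists>a' b' c'. L = a'@b'@c' \<and> list_all2 P a a' \<and> list_all2 P b b' \<and> list_all2 P c c'"
  by (auto simp: list_all2_append1)

lemma la_single_TF: "list_all2 (srt B xi) [TF F] L \<longleftrightarrow> L = [TF F]"
  by (auto simp: list_all2_Cons1 srt_TF)




definition cutP :: "fm \<Rightarrow> bool" where
  "cutP A \<longleftrightarrow> (\<forall>xi Pi M M' C. deriv (Meta xi Pi) A \<longrightarrow> deriv M C \<longrightarrow> replM A xi Pi M M' \<longrightarrow> deriv M' C)"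

lemma sr_frame: "srm B xi (fill X (Meta w (D1@S@D2))) N \<Longrightarrow>
   \<exists>Y w' D1' S' D2'. N = fill Y (Meta w' (D1'@S'@D2')) \<and> src B xi X Y \<and> sw B xi w w' \<and>
     list_all2 (srt B xi) D1 D1' \<and> list_all2 (srt B xi) S S' \<and> list_all2 (srt B xi) D2 D2'"
  apply (drule sr_fill_inv)
  apply (clarsimp simp: srm_Meta)
  apply (drule la_split3)
  apply blast
  done

lemma sr_build: "src B xi X Y \<Longrightarrow> sw B xi w w' \<Longrightarrow> list_all2 (srt B xi) D1 D1' \<Longrightarrow>
   list_all2 (srt B xi) S S' \<Longrightarrow> list_all2 (srt B xi) D2 D2' \<Longrightarrow>
   srm B xi (fill X (Meta w (D1@S@D2))) (fill Y (Meta w' (D1'@S'@D2')))"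
  by (auto intro!: sr_fill srM list_all2_appendI)

lemma la_split2: "list_all2 P (a@b) L \<Longrightarrow> \<exists>a' b'. L = a'@b' \<and> list_all2 P a a' \<and> list_all2 P b b'"
  by (auto simp: list_all2_append1)

lemma srm_single: "srm B xi (Meta {#} [TF F]) N \<Longrightarrow> N = Meta {#} [TF F]"
  by (auto simp: srm_Meta la_single_TF dest: sw_empty)

lemma la_single_Br: "list_all2 (srt B xi) [Br M] L \<longleftrightarrow> (\<exists>M'. L = [Br M'] \<and> srm B xi M M')"
  by (auto simp: list_all2_Cons1 srt_Br)

lemma sw_add_single: "sw B xi (z + {#F#}) w \<Longrightarrow> (\<exists>w0. w = w0 + {#F#} \<and> sw B xi z w0) \<or> (F = B \<and> (\<exists>w0. w = w0 + xi \<and> sw B xi z w0))"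
  by (drule sw_split) (auto dest: sw_single)

lemma stoup_cut:
  assumes cB: "cutP B" and dB: "deriv (Meta xi []) B" and ne: "xi \<noteq> {#}"
  shows "deriv M C \<Longrightarrow> srm B xi M M' \<Longrightarrow> deriv M' C"
proof (induction arbitrary: M' rule: deriv.induct)
  case (ax A)
  then show ?case by (auto dest!: srm_single intro: deriv.ax)
next
  case oneR
  then show ?case by (auto simp: srm_Meta dest!: sw_empty intro: deriv.oneR)
next
  case (rdivL z1 G B' X z2 D1 C' D2 D)
  from sr_frame[of B xi X "z1+z2" D1 "[TF (RDiv C' B')] @ G" D2 M'] rdivL.prems
  obtain Y w' D1' S' D2' where f: "M' = fill Y (Meta w' (D1'@S'@D2'))" "src B xi X Y" "sw B xi (z1+z2) w'"
    "list_all2 (srt B xi) D1 D1'" "list_all2 (srt B xi) ([TF (RDiv C' B')] @ G) S'" "list_all2 (srt B xi) D2 D2'"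
    by auto
  from la_split2[OF f(5)] obtain a' G' where s: "S' = a' @ G'" "a' = [TF (RDiv C' B')]" "list_all2 (srt B xi) G G'"
    by (auto simp: la_single_TF)
  from sw_split[OF f(3)] obtain z1' z2' where w: "w' = z1' + z2'" "sw B xi z1 z1'" "sw B xi z2 z2'" by blast
  have d1: "deriv (Meta z1' G') B'" using rdivL.IH(1) srM[OF w(2) s(3)] by blast
  have d2: "deriv (fill Y (Meta z2' (D1' @ [TF C'] @ D2'))) D"
    using rdivL.IH(2) sr_build[OF f(2) w(3) f(4) list.rel_refl[of "srt B xi" "[TF C']", OF sr_refl(2)] f(6)] by blast
  show ?case using deriv.rdivL[OF d1 d2] f(1) s w(1) by simp
next
  case (rdivR z G B' C')
  from rdivR.prems obtain z' G' where h: "M' = Meta z' G'" "sw B xi z z'" "list_all2 (srt B xi) G G'"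
    by (auto simp: srm_Meta)
  have "srm B xi (Meta z (G @ [TF B'])) (Meta z' (G' @ [TF B']))"
    using h by (auto intro!: srM list_all2_appendI srTF)
  then show ?case using rdivR.IH h(1) deriv.rdivR by blast
next
  case (ldivL z1 G A' X z2 D1 C' D2 D)
  from sr_frame[of B xi X "z1+z2" D1 "G @ [TF (LDiv A' C')]" D2 M'] ldivL.prems
  obtain Y w' D1' S' D2' where f: "M' = fill Y (Meta w' (D1'@S'@D2'))" "src B xi X Y" "sw B xi (z1+z2) w'"
    "list_all2 (srt B xi) D1 D1'" "list_all2 (srt B xi) (G @ [TF (LDiv A' C')]) S'" "list_all2 (srt B xi) D2 D2'"
    by auto
  from la_split2[OF f(5)] obtain a' G' where s: "S' = G' @ a'" "a' = [TF (LDiv A' C')]" "list_all2 (srt B xi) G G'"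
    by (auto simp: la_single_TF)
  from sw_split[OF f(3)] obtain z1' z2' where w: "w' = z1' + z2'" "sw B xi z1 z1'" "sw B xi z2 z2'" by blast
  have d1: "deriv (Meta z1' G') A'" using ldivL.IH(1) srM[OF w(2) s(3)] by blast
  have d2: "deriv (fill Y (Meta z2' (D1' @ [TF C'] @ D2'))) D"
    using ldivL.IH(2) sr_build[OF f(2) w(3) f(4) list.rel_refl[of "srt B xi" "[TF C']", OF sr_refl(2)] f(6)] by blast
  show ?case using deriv.ldivL[OF d1 d2] f(1) s w(1) by simp
next
  case (ldivR z A' G C')
  from ldivR.prems obtain z' G' where h: "M' = Meta z' G'" "sw B xi z z'" "list_all2 (srt B xi) G G'"
    by (auto simp: srm_Meta)
  have "srm B xi (Meta z (TF A' # G)) (Meta z' (TF A' # G'))"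
    using h by (auto intro!: srM srTF)
  then show ?case using ldivR.IH h(1) deriv.ldivR by blast
next
  case (prodL X z D1 A' B' D2 D)
  from sr_frame[of B xi X z D1 "[TF (Prod A' B')]" D2 M'] prodL.prems
  obtain Y w' D1' S' D2' where f: "M' = fill Y (Meta w' (D1'@S'@D2'))" "src B xi X Y" "sw B xi z w'"
    "list_all2 (srt B xi) D1 D1'" "list_all2 (srt B xi) [TF (Prod A' B')] S'" "list_all2 (srt B xi) D2 D2'"
    by auto
  have d: "deriv (fill Y (Meta w' (D1' @ [TF A', TF B'] @ D2'))) D"
    using prodL.IH sr_build[OF f(2) f(3) f(4) list.rel_refl[of "srt B xi" "[TF A', TF B']", OF sr_refl(2)] f(6)] by blast
  show ?case using deriv.prodL[OF d] f by (simp add: la_single_TF)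
next
  case (prodR z1 D A' z2 G B')
  from prodR.prems obtain w' L where h: "M' = Meta w' L" "sw B xi (z1+z2) w'" "list_all2 (srt B xi) (D@G) L"
    by (auto simp: srm_Meta)
  from la_split2[OF h(3)] obtain D' G' where l: "L = D'@G'" "list_all2 (srt B xi) D D'" "list_all2 (srt B xi) G G'" by blast
  from sw_split[OF h(2)] obtain z1' z2' where w: "w' = z1' + z2'" "sw B xi z1 z1'" "sw B xi z2 z2'" by blast
  show ?case using deriv.prodR[OF prodR.IH(1)[OF srM[OF w(2) l(2)]] prodR.IH(2)[OF srM[OF w(3) l(3)]]] h l w by simp
next
  case (oneL X z D1 D2 A')
  from sr_frame[of B xi X z D1 "[TF One]" D2 M'] oneL.prems
  obtain Y w' D1' S' D2' where f: "M' = fill Y (Meta w' (D1'@S'@D2'))" "src B xi X Y" "sw B xi z w'"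
    "list_all2 (srt B xi) D1 D1'" "list_all2 (srt B xi) [TF One] S'" "list_all2 (srt B xi) D2 D2'"
    by auto
  have d: "deriv (fill Y (Meta w' (D1' @ D2'))) A'"
    using oneL.IH sr_build[OF f(2) f(3) f(4) list.rel_refl[of "srt B xi" "[]", OF sr_refl(2)] f(6)] by simp
  show ?case using deriv.oneL[OF d] f by (simp add: la_single_TF)
next
  case (disjL X z D1 A1 D2 C' A2)
  from sr_frame[of B xi X z D1 "[TF (Disj A1 A2)]" D2 M'] disjL.prems
  obtain Y w' D1' S' D2' where f: "M' = fill Y (Meta w' (D1'@S'@D2'))" "src B xi X Y" "sw B xi z w'"
    "list_all2 (srt B xi) D1 D1'" "list_all2 (srt B xi) [TF (Disj A1 A2)] S'" "list_all2 (srt B xi) D2 D2'"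
    by auto
  have d1: "deriv (fill Y (Meta w' (D1' @ [TF A1] @ D2'))) C'"
    using disjL.IH(1) sr_build[OF f(2) f(3) f(4) list.rel_refl[of "srt B xi" "[TF A1]", OF sr_refl(2)] f(6)] by blast
  have d2: "deriv (fill Y (Meta w' (D1' @ [TF A2] @ D2'))) C'"
    using disjL.IH(2) sr_build[OF f(2) f(3) f(4) list.rel_refl[of "srt B xi" "[TF A2]", OF sr_refl(2)] f(6)] by blast
  show ?case using deriv.disjL[OF d1 d2] f by (simp add: la_single_TF)
next
  case (disjR1 M A1 A2)
  then show ?case by (blast intro: deriv.disjR1)
next
  case (disjR2 M A2 A1)
  then show ?case by (blast intro: deriv.disjR2)
next
  case (conjL1 X z D1 A1 D2 C' A2)
  from sr_frame[of B xi X z D1 "[TF (Conj A1 A2)]" D2 M'] conjL1.prems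
  obtain Y w' D1' S' D2' where f: "M' = fill Y (Meta w' (D1'@S'@D2'))" "src B xi X Y" "sw B xi z w'"
    "list_all2 (srt B xi) D1 D1'" "list_all2 (srt B xi) [TF (Conj A1 A2)] S'" "list_all2 (srt B xi) D2 D2'"
    by auto
  have d: "deriv (fill Y (Meta w' (D1' @ [TF A1] @ D2'))) C'"
    using conjL1.IH sr_build[OF f(2) f(3) f(4) list.rel_refl[of "srt B xi" "[TF A1]", OF sr_refl(2)] f(6)] by blast
  show ?case using deriv.conjL1[OF d] f by (simp add: la_single_TF)
next
  case (conjL2 X z D1 A2 D2 C' A1)
  from sr_frame[of B xi X z D1 "[TF (Conj A1 A2)]" D2 M'] conjL2.prems
  obtain Y w' D1' S' D2' where f: "M' = fill Y (Meta w' (D1'@S'@D2'))" "src B xi X Y" "sw B xi z w'"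
    "list_all2 (srt B xi) D1 D1'" "list_all2 (srt B xi) [TF (Conj A1 A2)] S'" "list_all2 (srt B xi) D2 D2'"
    by auto
  have d: "deriv (fill Y (Meta w' (D1' @ [TF A2] @ D2'))) C'"
    using conjL2.IH sr_build[OF f(2) f(3) f(4) list.rel_refl[of "srt B xi" "[TF A2]", OF sr_refl(2)] f(6)] by blast
  show ?case using deriv.conjL2[OF d] f by (simp add: la_single_TF)
next
  case (conjR M A1 A2)
  then show ?case by (blast intro: deriv.conjR)
next
  case (boxinvL X z D1 A' D2 B')
  from sr_frame[of B xi X z D1 "[Br (Meta {#} [TF (BoxInv A')])]" D2 M'] boxinvL.prems
  obtain Y w' D1' S' D2' where f: "M' = fill Y (Meta w' (D1'@S'@D2'))" "src B xi X Y" "sw B xi z w'"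
    "list_all2 (srt B xi) D1 D1'" "list_all2 (srt B xi) [Br (Meta {#} [TF (BoxInv A')])] S'" "list_all2 (srt B xi) D2 D2'"
    by auto
  have S': "S' = [Br (Meta {#} [TF (BoxInv A')])]" using f(5) by (auto simp: la_single_Br dest: srm_single)
  have d: "deriv (fill Y (Meta w' (D1' @ [TF A'] @ D2'))) B'"
    using boxinvL.IH sr_build[OF f(2) f(3) f(4) list.rel_refl[of "srt B xi" "[TF A']", OF sr_refl(2)] f(6)] by blast
  show ?case using deriv.boxinvL[OF d] f S' by simp
next
  case (boxinvR M A')
  have "srm B xi (Meta {#} [Br M]) (Meta {#} [Br M'])" using boxinvR.prems by (auto intro!: srM srBr sw_refl)
  then show ?case using boxinvR.IH deriv.boxinvR by blast
next
  case (diamL X z D1 A' D2 B')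
  from sr_frame[of B xi X z D1 "[TF (Diam A')]" D2 M'] diamL.prems
  obtain Y w' D1' S' D2' where f: "M' = fill Y (Meta w' (D1'@S'@D2'))" "src B xi X Y" "sw B xi z w'"
    "list_all2 (srt B xi) D1 D1'" "list_all2 (srt B xi) [TF (Diam A')] S'" "list_all2 (srt B xi) D2 D2'"
    by auto
  have d: "deriv (fill Y (Meta w' (D1' @ [Br (Meta {#} [TF A'])] @ D2'))) B'"
    using diamL.IH sr_build[OF f(2) f(3) f(4) list.rel_refl[of "srt B xi" "[Br (Meta {#} [TF A'])]", OF sr_refl(2)] f(6)] by blast
  show ?case using deriv.diamL[OF d] f by (simp add: la_single_TF)
next
  case (diamR M A')
  from diamR.prems obtain M'' where "M' = Meta {#} [Br M'']" "srm B xi M M''"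
    by (auto simp: srm_Meta la_single_Br dest: sw_empty)
  then show ?case using diamR.IH deriv.diamR by blast
next
  case (bangL X z A' G1 G2 B')
  from sr_frame[of B xi X z G1 "[TF (Bang A')]" G2 M'] bangL.prems
  obtain Y w' D1' S' D2' where f: "M' = fill Y (Meta w' (D1'@S'@D2'))" "src B xi X Y" "sw B xi z w'"
    "list_all2 (srt B xi) G1 D1'" "list_all2 (srt B xi) [TF (Bang A')] S'" "list_all2 (srt B xi) G2 D2'"
    by auto
  have "srm B xi (fill X (Meta (z + {#A'#}) (G1 @ [] @ G2))) (fill Y (Meta (w' + {#A'#}) (D1' @ [] @ D2')))"
    using sr_build[OF f(2) sw_add[OF f(3) sw_refl] f(4) list.rel_refl[of "srt B xi" "[]", OF sr_refl(2)] f(6)] .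
  then have d: "deriv (fill Y (Meta (w' + {#A'#}) (D1' @ D2'))) B'"
    using bangL.IH by simp
  show ?case using deriv.bangL[OF d] f by (simp add: la_single_TF)
next
  case (bangP X z G1 A' G2 B')
  from sr_frame[of B xi X "z + {#A'#}" G1 "[]" G2 M'] bangP.prems
  obtain Y w' D1' S' D2' where f: "M' = fill Y (Meta w' (D1'@S'@D2'))" "src B xi X Y" "sw B xi (z + {#A'#}) w'"
    "list_all2 (srt B xi) G1 D1'" "list_all2 (srt B xi) [] S'" "list_all2 (srt B xi) G2 D2'"
    by auto
  have S': "S' = []" using f(5) by simp
  from sw_add_single[OF f(3)] show ?case
  proof (elim disjE exE conjE)
    fix w0 assume w: "w' = w0 + {#A'#}" "sw B xi z w0"
    have d: "deriv (fill Y (Meta w0 (D1' @ [TF A'] @ D2'))) B'"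
      using bangP.IH sr_build[OF f(2) w(2) f(4) list.rel_refl[of "srt B xi" "[TF A']", OF sr_refl(2)] f(6)] by blast
    show ?thesis using deriv.bangP[OF d] f w S' by simp
  next
    fix w0 assume w: "A' = B" "w' = w0 + xi" "sw B xi z w0"
    have d: "deriv (fill Y (Meta w0 (D1' @ [TF B] @ D2'))) B'"
      using bangP.IH sr_build[OF f(2) w(3) f(4) list.rel_refl[of "srt B xi" "[TF B]", OF sr_refl(2)] f(6)] w(1) by blast
    have "deriv (fill Y (Meta (xi + w0) (D1' @ [] @ D2'))) B'"
      using cB dB d fill_repl[of B xi "[]" Y w0 D1' D2'] unfolding cutP_def by blast
    then show ?thesis using f w S' by (simp add: add.commute)
  qed
next
  case (bangR' z B')
  from bangR'.prems obtain z' where "M' = Meta z' []" "sw B xi z z'" by (auto simp: srm_Meta)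
  then show ?case using bangR'.IH bangR'.hyps(2) sw_ne[OF ne] deriv.bangR' srM[of B xi z z' "[]" "[]"] by auto
next
  case (bangC' X z1 z2 G1 z' G2 G3 C')
  from sr_frame[of B xi X "z1 + z2 + z'" G1 G2 G3 M'] bangC'.prems
  obtain Y w' D1' S' D2' where f: "M' = fill Y (Meta w' (D1'@S'@D2'))" "src B xi X Y" "sw B xi (z1 + z2 + z') w'"
    "list_all2 (srt B xi) G1 D1'" "list_all2 (srt B xi) G2 S'" "list_all2 (srt B xi) G3 D2'"
    by auto
  from sw_split[OF f(3)] obtain a b where ab: "w' = a + b" "sw B xi (z1+z2) a" "sw B xi z' b" by blast
  from sw_split[OF ab(2)] obtain z1' z2' where zz: "a = z1' + z2'" "sw B xi z1 z1'" "sw B xi z2 z2'" by blast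
  have br: "list_all2 (srt B xi) [Br (Meta (z' + z2) G2)] [Br (Meta (b + z2') S')]"
    using ab zz f(5) by (auto intro!: srBr srM sw_add)
  have d: "deriv (fill Y (Meta (z1' + z2') (D1' @ [Br (Meta (b + z2') S')] @ D2'))) C'"
    using bangC'.IH sr_build[OF f(2) sw_add[OF zz(2) zz(3)] f(4) br f(6)] by blast
  have "z2' \<noteq> {#}" using sw_ne[OF ne zz(3) bangC'.hyps(2)] .
  from deriv.bangC'[OF d this] show ?case using f ab zz by (simp add: ac_simps)
qed




definition rf :: "fm multiset \<Rightarrow> tree list \<Rightarrow> fm \<Rightarrow> bool" where
 "rf xi Pi F \<longleftrightarrow>
  (\<forall>C B. F = RDiv C B \<longrightarrow> deriv (Meta xi (Pi@[TF B])) C) \<and>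
  (\<forall>A C. F = LDiv A C \<longrightarrow> deriv (Meta xi (TF A # Pi)) C) \<and>
  (\<forall>A B. F = Prod A B \<longrightarrow> (\<exists>x1 x2 D G. xi = x1+x2 \<and> Pi = D@G \<and> deriv (Meta x1 D) A \<and> deriv (Meta x2 G) B)) \<and>
  (F = One \<longrightarrow> xi = {#} \<and> Pi = []) \<and>
  (\<forall>A B. F = Disj A B \<longrightarrow> deriv (Meta xi Pi) A \<or> deriv (Meta xi Pi) B) \<and>
  (\<forall>A B. F = Conj A B \<longrightarrow> deriv (Meta xi Pi) A \<and> deriv (Meta xi Pi) B) \<and>
  (\<forall>A. F = BoxInv A \<longrightarrow> deriv (Meta {#} [Br (Meta xi Pi)]) A) \<and>
  (\<forall>A. F = Diam A \<longrightarrow> xi = {#} \<and> (\<exists>M0. Pi = [Br M0] \<and> deriv M0 A)) \<and>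
  (\<forall>A. F = Bang A \<longrightarrow> Pi = [] \<and> xi \<noteq> {#} \<and> deriv (Meta xi []) A)"

lemma cut_at:
  assumes "cutP A" "deriv (Meta xi Pi) A" "deriv (fill X (Meta z L)) C" "L = G1@[TF A]@G2"
  shows "deriv (fill X (Meta (xi+z) (G1@Pi@G2))) C"
  using assms fill_repl[of A xi Pi X z G1 G2] unfolding cutP_def by blast

lemma repl_fill_T: "replT A xi Pi L e L' \<Longrightarrow> replM A xi Pi (fill X (Meta w L)) (fill X (Meta (e+w) L'))"
proof (induction X)
  case Hole
  then show ?case by (auto simp: replM_Meta)
next
  case (In x1 x2 X x4)
  then show ?case using rM0[OF In.IH[OF In.prems], of x1 x2 x4] by simp
qed

lemma replT_single_TF: "replT A xi Pi [TF F] e S' \<longleftrightarrow> F = A \<and> e = xi \<and> S' = Pi"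
  by (simp add: replT_single replE_TF)

lemma right_principal:
  assumes sm: "\<forall>A'. size A' < size F \<longrightarrow> cutP A'" and rfF: "rf xi Pi F" and dF: "deriv (Meta xi Pi) F"
  shows "deriv M C \<Longrightarrow> replM F xi Pi M M' \<Longrightarrow> deriv M' C"
proof (induction arbitrary: M' rule: deriv.induct)
  case (ax A)
  then obtain e S' where "replT F xi Pi [TF A] e S'" "M' = Meta (e + {#}) S'" by (auto simp: replM_Meta)
  then show ?case using dF by (auto simp: replT_single_TF)
next
  case oneR
  then show ?case by (auto simp: replM_Meta replT_Nil)
next
  case (rdivL z1 G B' X z2 D1 C' D2 D)
  have pr: "replM F xi Pi (fill X (Meta (z1+z2) (D1 @ ([TF (RDiv C' B')] @ G) @ D2))) M'" using rdivL.prems by simp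
  from frame[OF pr] show ?case
  proof (elim disjE exE conjE)
    fix Y' e D1' D2' assume a: "M' = fill Y' (Meta (e + (z1+z2)) (D1' @ ([TF (RDiv C' B')] @ G) @ D2'))"
      "\<forall>Sx wx. replM F xi Pi (fill X (Meta wx (D1 @ Sx @ D2))) (fill Y' (Meta (e + wx) (D1' @ Sx @ D2')))"
    have "deriv (fill Y' (Meta (e+z2) (D1' @ [TF C'] @ D2'))) D" using rdivL.IH(2) a(2) by blast
    from deriv.rdivL[OF rdivL.hyps(1) this] show ?thesis using a(1) by (simp add: ac_simps)
  next
    fix e S' assume b: "replT F xi Pi ([TF (RDiv C' B')] @ G) e S'" "M' = fill X (Meta (e + (z1+z2)) (D1 @ S' @ D2))"
    from replT_append[OF b(1)] show ?thesis
    proof (elim disjE exE conjE)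
      fix xs' assume c: "replT F xi Pi [TF (RDiv C' B')] e xs'" "S' = xs' @ G"
      then have F: "F = RDiv C' B'" "e = xi" "xs' = Pi" by (auto simp: replT_single_TF)
      have d0: "deriv (Meta xi (Pi@[TF B'])) C'" using rfF F unfolding rf_def by auto
      have d1: "deriv (fill Hole (Meta (z1+xi) (Pi@G@[]))) C'"
        by (rule cut_at[OF _ rdivL.hyps(1)]) (use sm F d0 in auto)
      have "deriv (fill X (Meta ((z1+xi)+z2) (D1@(Pi@G)@D2))) D"
        by (rule cut_at[OF _ _ rdivL.hyps(2)]) (use sm F d1 in auto)
      then show ?thesis using b(2) c F by (simp add: ac_simps)
    next
      fix ys' assume c: "replT F xi Pi G e ys'" "S' = [TF (RDiv C' B')] @ ys'"
      have "deriv (Meta (e+z1) ys') B'" using rdivL.IH(1) c(1) by (auto simp: replM_Meta)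
      from deriv.rdivL[OF this rdivL.hyps(2)] show ?thesis using b(2) c by (simp add: ac_simps)
    qed
  qed
next
  case (rdivR z G B' C')
  from rdivR.prems obtain e G' where h: "replT F xi Pi G e G'" "M' = Meta (e+z) G'" by (auto simp: replM_Meta)
  have "replM F xi Pi (Meta z (G@[TF B'])) (Meta (e+z) (G'@[TF B']))" using h by (auto simp: replM_Meta intro: replT_appL)
  then show ?case using rdivR.IH h(2) deriv.rdivR by blast
next
  case (ldivL z1 G A' X z2 D1 C' D2 D)
  have pr: "replM F xi Pi (fill X (Meta (z1+z2) (D1 @ (G @ [TF (LDiv A' C')]) @ D2))) M'" using ldivL.prems by simp
  from frame[OF pr] show ?case
  proof (elim disjE exE conjE)
    fix Y' e D1' D2' assume a: "M' = fill Y' (Meta (e + (z1+z2)) (D1' @ (G @ [TF (LDiv A' C')]) @ D2'))"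
      "\<forall>Sx wx. replM F xi Pi (fill X (Meta wx (D1 @ Sx @ D2))) (fill Y' (Meta (e + wx) (D1' @ Sx @ D2')))"
    have "deriv (fill Y' (Meta (e+z2) (D1' @ [TF C'] @ D2'))) D" using ldivL.IH(2) a(2) by blast
    from deriv.ldivL[OF ldivL.hyps(1) this] show ?thesis using a(1) by (simp add: ac_simps)
  next
    fix e S' assume b: "replT F xi Pi (G @ [TF (LDiv A' C')]) e S'" "M' = fill X (Meta (e + (z1+z2)) (D1 @ S' @ D2))"
    from replT_append[OF b(1)] show ?thesis
    proof (elim disjE exE conjE)
      fix ys' assume c: "replT F xi Pi [TF (LDiv A' C')] e ys'" "S' = G @ ys'"
      then have F: "F = LDiv A' C'" "e = xi" "ys' = Pi" by (auto simp: replT_single_TF)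
      have d0: "deriv (Meta xi (TF A' # Pi)) C'" using rfF F unfolding rf_def by auto
      have d1: "deriv (fill Hole (Meta (z1+xi) ([]@G@Pi))) C'"
        by (rule cut_at[OF _ ldivL.hyps(1)]) (use sm F d0 in auto)
      have "deriv (fill X (Meta ((z1+xi)+z2) (D1@(G@Pi)@D2))) D"
        by (rule cut_at[OF _ _ ldivL.hyps(2)]) (use sm F d1 in auto)
      then show ?thesis using b(2) c F by (simp add: ac_simps)
    next
      fix xs' assume c: "replT F xi Pi G e xs'" "S' = xs' @ [TF (LDiv A' C')]"
      have "deriv (Meta (e+z1) xs') A'" using ldivL.IH(1) c(1) by (auto simp: replM_Meta)
      from deriv.ldivL[OF this ldivL.hyps(2)] show ?thesis using b(2) c by (simp add: ac_simps)
    qed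
  qed
next
  case (ldivR z A' G C')
  from ldivR.prems obtain e G' where h: "replT F xi Pi G e G'" "M' = Meta (e+z) G'" by (auto simp: replM_Meta)
  have "replT F xi Pi ([TF A'] @ G) e ([TF A'] @ G')" using h(1) by (rule replT_appR)
  then have "replM F xi Pi (Meta z ([TF A'] @ G)) (Meta (e+z) ([TF A'] @ G'))" by (auto simp: replM_Meta)
  then show ?case using ldivR.IH h(2) deriv.ldivR by simp
next
  case (prodL X z D1 A' B' D2 D)
  from frame[OF prodL.prems] show ?case
  proof (elim disjE exE conjE)
    fix Y' e D1' D2' assume a: "M' = fill Y' (Meta (e + z) (D1' @ [TF (Prod A' B')] @ D2'))"
      "\<forall>Sx wx. replM F xi Pi (fill X (Meta wx (D1 @ Sx @ D2))) (fill Y' (Meta (e + wx) (D1' @ Sx @ D2')))"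
    have "deriv (fill Y' (Meta (e+z) (D1' @ [TF A', TF B'] @ D2'))) D" using prodL.IH a(2) by blast
    from deriv.prodL[OF this] show ?thesis using a(1) by simp
  next
    fix e S' assume b: "replT F xi Pi [TF (Prod A' B')] e S'" "M' = fill X (Meta (e + z) (D1 @ S' @ D2))"
    then have F: "F = Prod A' B'" "e = xi" "S' = Pi" by (auto simp: replT_single_TF)
    then obtain x1 x2 DD GG where p: "xi = x1+x2" "Pi = DD@GG" "deriv (Meta x1 DD) A'" "deriv (Meta x2 GG) B'"
      using rfF unfolding rf_def by blast
    have d1: "deriv (fill X (Meta (x1+z) (D1@DD@[TF B']@D2))) D"
      by (rule cut_at[OF _ p(3) prodL.hyps]) (use sm F in auto)
    have "deriv (fill X (Meta (x2+(x1+z)) ((D1@DD)@GG@D2))) D"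
      by (rule cut_at[OF _ p(4) d1]) (use sm F in auto)
    then show ?thesis using b(2) F p by (simp add: ac_simps)
  qed
next
  case (prodR z1 D A' z2 G B')
  from prodR.prems obtain e L where h: "replT F xi Pi (D@G) e L" "M' = Meta (e+(z1+z2)) L" by (auto simp: replM_Meta)
  from replT_append[OF h(1)] show ?case
  proof (elim disjE exE conjE)
    fix xs' assume c: "replT F xi Pi D e xs'" "L = xs' @ G"
    have "deriv (Meta (e+z1) xs') A'" using prodR.IH(1) c(1) by (auto simp: replM_Meta)
    from deriv.prodR[OF this prodR.hyps(2)] show ?thesis using h c by (simp add: ac_simps)
  next
    fix ys' assume c: "replT F xi Pi G e ys'" "L = D @ ys'"
    have "deriv (Meta (e+z2) ys') B'" using prodR.IH(2) c(1) by (auto simp: replM_Meta)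
    from deriv.prodR[OF prodR.hyps(1) this] show ?thesis using h c by (simp add: ac_simps)
  qed
next
  case (oneL X z D1 D2 A')
  from frame[OF oneL.prems] show ?case
  proof (elim disjE exE conjE)
    fix Y' e D1' D2' assume a: "M' = fill Y' (Meta (e + z) (D1' @ [TF One] @ D2'))"
      "\<forall>Sx wx. replM F xi Pi (fill X (Meta wx (D1 @ Sx @ D2))) (fill Y' (Meta (e + wx) (D1' @ Sx @ D2')))"
    have "deriv (fill Y' (Meta (e+z) (D1' @ D2'))) A'" using oneL.IH a(2)[rule_format, where Sx="[]"] by simp
    from deriv.oneL[OF this] show ?thesis using a(1) by simp
  next
    fix e S' assume b: "replT F xi Pi [TF One] e S'" "M' = fill X (Meta (e + z) (D1 @ S' @ D2))"
    then have F: "F = One" "e = xi" "S' = Pi" by (auto simp: replT_single_TF)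
    then have "xi = {#}" "Pi = []" using rfF unfolding rf_def by auto
    then show ?thesis using b(2) F oneL.hyps by simp
  qed
next
  case (disjL X z D1 A1 D2 C' A2)
  from frame[OF disjL.prems] show ?case
  proof (elim disjE exE conjE)
    fix Y' e D1' D2' assume a: "M' = fill Y' (Meta (e + z) (D1' @ [TF (Disj A1 A2)] @ D2'))"
      "\<forall>Sx wx. replM F xi Pi (fill X (Meta wx (D1 @ Sx @ D2))) (fill Y' (Meta (e + wx) (D1' @ Sx @ D2')))"
    have "deriv (fill Y' (Meta (e+z) (D1' @ [TF A1] @ D2'))) C'" using disjL.IH(1) a(2) by blast
    moreover have "deriv (fill Y' (Meta (e+z) (D1' @ [TF A2] @ D2'))) C'" using disjL.IH(2) a(2) by blast
    ultimately show ?thesis using a(1) deriv.disjL by simp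
  next
    fix e S' assume b: "replT F xi Pi [TF (Disj A1 A2)] e S'" "M' = fill X (Meta (e + z) (D1 @ S' @ D2))"
    then have F: "F = Disj A1 A2" "e = xi" "S' = Pi" by (auto simp: replT_single_TF)
    then have "deriv (Meta xi Pi) A1 \<or> deriv (Meta xi Pi) A2" using rfF unfolding rf_def by auto
    then show ?thesis
    proof
      assume "deriv (Meta xi Pi) A1"
      from cut_at[OF _ this disjL.hyps(1)] show ?thesis using sm F b(2) by auto
    next
      assume "deriv (Meta xi Pi) A2"
      from cut_at[OF _ this disjL.hyps(2)] show ?thesis using sm F b(2) by auto
    qed
  qed
next
  case (disjR1 M A1 A2)
  then show ?case by (blast intro: deriv.disjR1)
next
  case (disjR2 M A2 A1)
  then show ?case by (blast intro: deriv.disjR2)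
next
  case (conjL1 X z D1 A1 D2 C' A2)
  from frame[OF conjL1.prems] show ?case
  proof (elim disjE exE conjE)
    fix Y' e D1' D2' assume a: "M' = fill Y' (Meta (e + z) (D1' @ [TF (Conj A1 A2)] @ D2'))"
      "\<forall>Sx wx. replM F xi Pi (fill X (Meta wx (D1 @ Sx @ D2))) (fill Y' (Meta (e + wx) (D1' @ Sx @ D2')))"
    have "deriv (fill Y' (Meta (e+z) (D1' @ [TF A1] @ D2'))) C'" using conjL1.IH a(2) by blast
    then show ?thesis using a(1) deriv.conjL1 by simp
  next
    fix e S' assume b: "replT F xi Pi [TF (Conj A1 A2)] e S'" "M' = fill X (Meta (e + z) (D1 @ S' @ D2))"
    then have F: "F = Conj A1 A2" "e = xi" "S' = Pi" by (auto simp: replT_single_TF)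
    then have "deriv (Meta xi Pi) A1" using rfF unfolding rf_def by auto
    from cut_at[OF _ this conjL1.hyps(1)] show ?thesis using sm F b(2) by auto
  qed
next
  case (conjL2 X z D1 A2 D2 C' A1)
  from frame[OF conjL2.prems] show ?case
  proof (elim disjE exE conjE)
    fix Y' e D1' D2' assume a: "M' = fill Y' (Meta (e + z) (D1' @ [TF (Conj A1 A2)] @ D2'))"
      "\<forall>Sx wx. replM F xi Pi (fill X (Meta wx (D1 @ Sx @ D2))) (fill Y' (Meta (e + wx) (D1' @ Sx @ D2')))"
    have "deriv (fill Y' (Meta (e+z) (D1' @ [TF A2] @ D2'))) C'" using conjL2.IH a(2) by blast
    then show ?thesis using a(1) deriv.conjL2 by simp
  next
    fix e S' assume b: "replT F xi Pi [TF (Conj A1 A2)] e S'" "M' = fill X (Meta (e + z) (D1 @ S' @ D2))"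
    then have F: "F = Conj A1 A2" "e = xi" "S' = Pi" by (auto simp: replT_single_TF)
    then have "deriv (Meta xi Pi) A2" using rfF unfolding rf_def by auto
    from cut_at[OF _ this conjL2.hyps(1)] show ?thesis using sm F b(2) by auto
  qed
next
  case (conjR M A1 A2)
  then show ?case by (blast intro: deriv.conjR)
next
  case (boxinvL X z D1 A' D2 B')
  from frame[OF boxinvL.prems] show ?case
  proof (elim disjE exE conjE)
    fix Y' e D1' D2' assume a: "M' = fill Y' (Meta (e + z) (D1' @ [Br (Meta {#} [TF (BoxInv A')])] @ D2'))"
      "\<forall>Sx wx. replM F xi Pi (fill X (Meta wx (D1 @ Sx @ D2))) (fill Y' (Meta (e + wx) (D1' @ Sx @ D2')))"
    have "deriv (fill Y' (Meta (e+z) (D1' @ [TF A'] @ D2'))) B'" using boxinvL.IH a(2) by blast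
    then show ?thesis using a(1) deriv.boxinvL by simp
  next
    fix e S' assume b: "replT F xi Pi [Br (Meta {#} [TF (BoxInv A')])] e S'" "M' = fill X (Meta (e + z) (D1 @ S' @ D2))"
    then obtain M'' where m: "e = {#}" "S' = [Br M'']" "replM F xi Pi (Meta {#} [TF (BoxInv A')]) M''"
      by (auto simp: replT_single replE_Br)
    then have F: "F = BoxInv A'" "M'' = Meta xi Pi" by (auto simp: replM_Meta replT_single_TF)
    then have "deriv (Meta {#} [Br (Meta xi Pi)]) A'" using rfF unfolding rf_def by auto
    from cut_at[OF _ this boxinvL.hyps] show ?thesis using sm F b(2) m by auto
  qed
next
  case (boxinvR M A')
  have "replM F xi Pi (Meta {#} ([] @ [Br M] @ [])) (Meta {#} ([] @ [Br M'] @ []))"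
    using rM0[OF boxinvR.prems] .
  then show ?case using boxinvR.IH deriv.boxinvR by simp
next
  case (diamL X z D1 A' D2 B')
  from frame[OF diamL.prems] show ?case
  proof (elim disjE exE conjE)
    fix Y' e D1' D2' assume a: "M' = fill Y' (Meta (e + z) (D1' @ [TF (Diam A')] @ D2'))"
      "\<forall>Sx wx. replM F xi Pi (fill X (Meta wx (D1 @ Sx @ D2))) (fill Y' (Meta (e + wx) (D1' @ Sx @ D2')))"
    have "deriv (fill Y' (Meta (e+z) (D1' @ [Br (Meta {#} [TF A'])] @ D2'))) B'" using diamL.IH a(2) by blast
    then show ?thesis using a(1) deriv.diamL by simp
  next
    fix e S' assume b: "replT F xi Pi [TF (Diam A')] e S'" "M' = fill X (Meta (e + z) (D1 @ S' @ D2))"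
    then have F: "F = Diam A'" "e = xi" "S' = Pi" by (auto simp: replT_single_TF)
    then obtain M0 where m: "xi = {#}" "Pi = [Br M0]" "deriv M0 A'" using rfF unfolding rf_def by auto
    obtain x0 P0 where M0: "M0 = Meta x0 P0" by (cases M0)
    have "deriv (fill (comp X (In z D1 Hole D2)) (Meta {#} [TF A'])) B'"
      using diamL.hyps by (simp add: fill_comp)
    from cut_at[OF _ m(3)[unfolded M0] this, of "[]" "[]"]
    have "deriv (fill (comp X (In z D1 Hole D2)) (Meta (x0 + {#}) P0)) B'" using sm F by auto
    then show ?thesis using b(2) F m M0 by (simp add: fill_comp)
  qed
next
  case (diamR M A')
  from diamR.prems obtain e S' where h: "replT F xi Pi [Br M] e S'" "M' = Meta (e+{#}) S'" by (auto simp: replM_Meta)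
  then obtain M'' where "e = {#}" "S' = [Br M'']" "replM F xi Pi M M''" by (auto simp: replT_single replE_Br)
  then show ?case using h(2) diamR.IH deriv.diamR by simp
next
  case (bangL X z A' G1 G2 B')
  from frame[OF bangL.prems] show ?case
  proof (elim disjE exE conjE)
    fix Y' e D1' D2' assume a: "M' = fill Y' (Meta (e + z) (D1' @ [TF (Bang A')] @ D2'))"
      "\<forall>Sx wx. replM F xi Pi (fill X (Meta wx (G1 @ Sx @ G2))) (fill Y' (Meta (e + wx) (D1' @ Sx @ D2')))"
    have "deriv (fill Y' (Meta (e+(z + {#A'#})) (D1' @ [] @ D2'))) B'"
      using bangL.IH[OF a(2)[rule_format, where Sx="[]" and wx="z + {#A'#}", simplified append_Nil]] by simp
    then have "deriv (fill Y' (Meta ((e+z) + {#A'#}) (D1' @ D2'))) B'" by (simp add: ac_simps)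
    then show ?thesis using a(1) deriv.bangL[of Y' "e+z" A' D1' D2' B'] by (simp add: ac_simps)
  next
    fix e S' assume b: "replT F xi Pi [TF (Bang A')] e S'" "M' = fill X (Meta (e + z) (G1 @ S' @ G2))"
    then have F: "F = Bang A'" "e = xi" "S' = Pi" by (auto simp: replT_single_TF)
    then have p: "Pi = []" "xi \<noteq> {#}" "deriv (Meta xi []) A'" using rfF unfolding rf_def by auto
    have "srm A' xi (fill X (Meta (z + {#A'#}) (G1 @ [] @ G2))) (fill X (Meta (z + xi) (G1 @ [] @ G2)))"
      by (rule sr_build[OF src_refl sw_add[OF sw_refl sw_one] sr_list_refl sr_list_refl sr_list_refl])
    then have "srm A' xi (fill X (Meta (z + {#A'#}) (G1 @ G2))) (fill X (Meta (z + xi) (G1 @ G2)))" by simp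
    from stoup_cut[OF _ p(3) p(2) bangL.hyps this] show ?thesis using sm F p b(2) by (simp add: ac_simps)
  qed
next
  case (bangP X z G1 A' G2 B')
  have pr: "replM F xi Pi (fill X (Meta (z + {#A'#}) (G1 @ [] @ G2))) M'" using bangP.prems by simp
  from frame[OF pr] show ?case
  proof (elim disjE exE conjE)
    fix Y' e D1' D2' assume a: "M' = fill Y' (Meta (e + (z + {#A'#})) (D1' @ [] @ D2'))"
      "\<forall>Sx wx. replM F xi Pi (fill X (Meta wx (G1 @ Sx @ G2))) (fill Y' (Meta (e + wx) (D1' @ Sx @ D2')))"
    have "deriv (fill Y' (Meta (e+z) (D1' @ [TF A'] @ D2'))) B'" using bangP.IH a(2) by blast
    from deriv.bangP[OF this] show ?thesis using a(1) by (simp add: ac_simps)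
  next
    fix e S' assume "replT F xi Pi [] e S'"
    then show ?thesis by (simp add: replT_Nil)
  qed
next
  case (bangR' z B')
  then show ?case by (auto simp: replM_Meta replT_Nil)
next
  case (bangC' X z1 z2 G1 z' G2 G3 C')
  have pr: "replM F xi Pi (fill X (Meta (z1 + z2 + z') ([] @ (G1 @ G2 @ G3) @ []))) M'" using bangC'.prems by simp
  from frame[OF pr] show ?case
  proof (elim disjE exE conjE)
    fix Y' e D1' D2' assume a: "M' = fill Y' (Meta (e + (z1 + z2 + z')) (D1' @ (G1 @ G2 @ G3) @ D2'))"
      "\<forall>Sx wx. replM F xi Pi (fill X (Meta wx ([] @ Sx @ []))) (fill Y' (Meta (e + wx) (D1' @ Sx @ D2')))"
    have "deriv (fill Y' (Meta (e+(z1+z2)) (D1' @ (G1 @ [Br (Meta (z' + z2) G2)] @ G3) @ D2'))) C'"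
      using bangC'.IH a(2)[rule_format, where wx="z1+z2" and Sx="G1 @ [Br (Meta (z' + z2) G2)] @ G3"] by simp
    then have "deriv (fill Y' (Meta ((e+z1)+z2) ((D1' @ G1) @ [Br (Meta (z' + z2) G2)] @ (G3 @ D2')))) C'"
      by (simp add: ac_simps)
    from deriv.bangC'[OF this bangC'.hyps(2)] show ?thesis using a(1) by (simp add: ac_simps)
  next
    fix e S' assume b: "replT F xi Pi (G1 @ G2 @ G3) e S'" "M' = fill X (Meta (e + (z1 + z2 + z')) ([] @ S' @ []))"
    from replT_append3[OF b(1)] show ?thesis
    proof (elim disjE exE conjE)
      fix xs' assume c: "replT F xi Pi G1 e xs'" "S' = xs' @ G2 @ G3"
      have "replT F xi Pi (G1 @ [Br (Meta (z' + z2) G2)] @ G3) e (xs' @ [Br (Meta (z' + z2) G2)] @ G3)"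
        using c(1) by (rule replT_appL)
      from bangC'.IH[OF repl_fill_T[OF this]]
      have "deriv (fill X (Meta ((e + z1) + z2) (xs' @ [Br (Meta (z' + z2) G2)] @ G3))) C'" by (simp add: ac_simps)
      from deriv.bangC'[OF this bangC'.hyps(2)] show ?thesis using b(2) c by (simp add: ac_simps)
    next
      fix zs' assume c: "replT F xi Pi G3 e zs'" "S' = G1 @ G2 @ zs'"
      have "replT F xi Pi (G1 @ [Br (Meta (z' + z2) G2)] @ G3) e (G1 @ [Br (Meta (z' + z2) G2)] @ zs')"
        using c(1) replT_appR by (metis append.assoc)
      from bangC'.IH[OF repl_fill_T[OF this]]
      have "deriv (fill X (Meta ((e + z1) + z2) (G1 @ [Br (Meta (z' + z2) G2)] @ zs'))) C'" by (simp add: ac_simps)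
      from deriv.bangC'[OF this bangC'.hyps(2)] show ?thesis using b(2) c by (simp add: ac_simps)
    next
      fix ys' assume c: "replT F xi Pi G2 e ys'" "S' = G1 @ ys' @ G3"
      have inner: "replM F xi Pi (Meta (z' + z2) G2) (Meta (e + (z' + z2)) ys')"
        using c(1) by (auto simp: replM_Meta)
      have "replT F xi Pi (G1 @ [Br (Meta (z' + z2) G2)] @ G3) {#} (G1 @ [Br (Meta (e + (z' + z2)) ys')] @ G3)"
        unfolding replT_def using rE_br[OF inner] by blast
      from bangC'.IH[OF repl_fill_T[OF this]]
      have "deriv (fill X (Meta (z1 + z2) (G1 @ [Br (Meta ((e + z') + z2) ys')] @ G3))) C'" by (simp add: ac_simps)
      from deriv.bangC'[OF this bangC'.hyps(2)] show ?thesis using b(2) c by (simp add: ac_simps)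
    qed
  qed
qed




lemma main_d1:
  "deriv N F \<Longrightarrow> (\<forall>A'. size A' < size F \<longrightarrow> cutP A') \<Longrightarrow> N = Meta xi Pi \<Longrightarrow> deriv M C \<Longrightarrow> replM F xi Pi M M' \<Longrightarrow> deriv M' C"
proof (induction arbitrary: xi Pi M M' C rule: deriv.induct)
  case (ax A)
  obtain X z G1 G2 where h: "M = fill X (Meta z (G1@[TF A]@G2))" "M' = fill X (Meta (xi+z) (G1@Pi@G2))"
    using repl_fill(1)[OF ax.prems(4)] by blast
  have "xi = {#}" "Pi = [TF A]" using ax.prems(2) by auto
  then have "M' = M" using h by simp
  then show ?case using ax.prems(3) by simp
next
  case oneR
  have "rf xi Pi One" using oneR.prems(2) unfolding rf_def by simp
  moreover have "deriv (Meta xi Pi) One" using deriv.oneR oneR.prems(2) by simp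
  ultimately show ?case by (rule right_principal[OF oneR.prems(1) _ _ oneR.prems(3) oneR.prems(4)])
next
  case (rdivL z1 G B X z2 D1 C0 D2 F0)
  have eq: "Meta xi Pi = fill X (Meta (z1+z2) (D1 @ ([TF (RDiv C0 B)] @ G) @ D2))" using rdivL.prems(2) by simp
  obtain Y e D1' D2' where p: "M' = fill Y (Meta (e+(z1+z2)) (D1'@([TF (RDiv C0 B)] @ G)@D2'))"
    "\<forall>wx Sx xi0 Pi0. Meta xi0 Pi0 = fill X (Meta wx (D1@Sx@D2)) \<longrightarrow> replM F0 xi0 Pi0 M (fill Y (Meta (e+wx) (D1'@Sx@D2')))"
    using plug[OF rdivL.prems(4) eq] by blast
  obtain xi0 Pi0 where q: "fill X (Meta z2 (D1@[TF C0]@D2)) = Meta xi0 Pi0" by (metis meta.exhaust)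
  have "deriv (fill Y (Meta (e+z2) (D1'@[TF C0]@D2'))) C"
    using rdivL.IH(2)[OF rdivL.prems(1) q rdivL.prems(3) p(2)[rule_format, OF q[symmetric]]] .
  from deriv.rdivL[OF rdivL.hyps(1) this] show ?case using p(1) by (simp add: ac_simps)
next
  case (rdivR z G B C0)
  have "rf xi Pi (RDiv C0 B)" using rdivR.prems(2) rdivR.hyps unfolding rf_def by simp
  moreover have "deriv (Meta xi Pi) (RDiv C0 B)" using deriv.rdivR[OF rdivR.hyps] rdivR.prems(2) by simp
  ultimately show ?case by (rule right_principal[OF rdivR.prems(1) _ _ rdivR.prems(3) rdivR.prems(4)])
next
  case (ldivL z1 G A X z2 D1 C0 D2 F0)
  have eq: "Meta xi Pi = fill X (Meta (z1+z2) (D1 @ (G @ [TF (LDiv A C0)]) @ D2))" using ldivL.prems(2) by simp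
  obtain Y e D1' D2' where p: "M' = fill Y (Meta (e+(z1+z2)) (D1'@(G @ [TF (LDiv A C0)])@D2'))"
    "\<forall>wx Sx xi0 Pi0. Meta xi0 Pi0 = fill X (Meta wx (D1@Sx@D2)) \<longrightarrow> replM F0 xi0 Pi0 M (fill Y (Meta (e+wx) (D1'@Sx@D2')))"
    using plug[OF ldivL.prems(4) eq] by blast
  obtain xi0 Pi0 where q: "fill X (Meta z2 (D1@[TF C0]@D2)) = Meta xi0 Pi0" by (metis meta.exhaust)
  have "deriv (fill Y (Meta (e+z2) (D1'@[TF C0]@D2'))) C"
    using ldivL.IH(2)[OF ldivL.prems(1) q ldivL.prems(3) p(2)[rule_format, OF q[symmetric]]] .
  from deriv.ldivL[OF ldivL.hyps(1) this] show ?case using p(1) by (simp add: ac_simps)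
next
  case (ldivR z A G C0)
  have "rf xi Pi (LDiv A C0)" using ldivR.prems(2) ldivR.hyps unfolding rf_def by simp
  moreover have "deriv (Meta xi Pi) (LDiv A C0)" using deriv.ldivR[OF ldivR.hyps] ldivR.prems(2) by simp
  ultimately show ?case by (rule right_principal[OF ldivR.prems(1) _ _ ldivR.prems(3) ldivR.prems(4)])
next
  case (prodL X z D1 A B D2 F0)
  obtain Y e D1' D2' where p: "M' = fill Y (Meta (e+z) (D1'@[TF (Prod A B)]@D2'))"
    "\<forall>wx Sx xi0 Pi0. Meta xi0 Pi0 = fill X (Meta wx (D1@Sx@D2)) \<longrightarrow> replM F0 xi0 Pi0 M (fill Y (Meta (e+wx) (D1'@Sx@D2')))"
    using plug[OF prodL.prems(4) prodL.prems(2)[symmetric]] by blast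
  obtain xi0 Pi0 where q: "fill X (Meta z (D1@[TF A, TF B]@D2)) = Meta xi0 Pi0" by (metis meta.exhaust)
  have "deriv (fill Y (Meta (e+z) (D1'@[TF A, TF B]@D2'))) C"
    using prodL.IH[OF prodL.prems(1) q prodL.prems(3) p(2)[rule_format, OF q[symmetric]]] .
  from deriv.prodL[OF this] show ?case using p(1) by simp
next
  case (prodR z1 D A z2 G B)
  have xp: "xi = z1+z2" "Pi = D@G" using prodR.prems(2) by auto
  have "rf xi Pi (Prod A B)" unfolding rf_def
    by (simp only: fm.simps simp_thms) (use xp prodR.hyps in blast)
  moreover have "deriv (Meta xi Pi) (Prod A B)" using deriv.prodR[OF prodR.hyps] prodR.prems(2) by simp
  ultimately show ?case by (rule right_principal[OF prodR.prems(1) _ _ prodR.prems(3) prodR.prems(4)])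
next
  case (oneL X z D1 D2 F0)
  obtain Y e D1' D2' where p: "M' = fill Y (Meta (e+z) (D1'@[TF One]@D2'))"
    "\<forall>wx Sx xi0 Pi0. Meta xi0 Pi0 = fill X (Meta wx (D1@Sx@D2)) \<longrightarrow> replM F0 xi0 Pi0 M (fill Y (Meta (e+wx) (D1'@Sx@D2')))"
    using plug[OF oneL.prems(4) oneL.prems(2)[symmetric]] by blast
  obtain xi0 Pi0 where q: "fill X (Meta z (D1@[]@D2)) = Meta xi0 Pi0" by (metis meta.exhaust)
  have "deriv (fill Y (Meta (e+z) (D1'@[]@D2'))) C"
    using oneL.IH[OF oneL.prems(1) q[simplified] oneL.prems(3) p(2)[rule_format, OF q[symmetric], simplified]] by simp
  from deriv.oneL[OF this[simplified]] show ?case using p(1) by simp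
next
  case (disjL X z D1 A1 D2 F0 A2)
  obtain Y e D1' D2' where p: "M' = fill Y (Meta (e+z) (D1'@[TF (Disj A1 A2)]@D2'))"
    "\<forall>wx Sx xi0 Pi0. Meta xi0 Pi0 = fill X (Meta wx (D1@Sx@D2)) \<longrightarrow> replM F0 xi0 Pi0 M (fill Y (Meta (e+wx) (D1'@Sx@D2')))"
    using plug[OF disjL.prems(4) disjL.prems(2)[symmetric]] by blast
  obtain xi0 Pi0 where q: "fill X (Meta z (D1@[TF A1]@D2)) = Meta xi0 Pi0" by (metis meta.exhaust)
  obtain xi1 Pi1 where q1: "fill X (Meta z (D1@[TF A2]@D2)) = Meta xi1 Pi1" by (metis meta.exhaust)
  have "deriv (fill Y (Meta (e+z) (D1'@[TF A1]@D2'))) C"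
    using disjL.IH(1)[OF disjL.prems(1) q disjL.prems(3) p(2)[rule_format, OF q[symmetric]]] .
  moreover have "deriv (fill Y (Meta (e+z) (D1'@[TF A2]@D2'))) C"
    using disjL.IH(2)[OF disjL.prems(1) q1 disjL.prems(3) p(2)[rule_format, OF q1[symmetric]]] .
  ultimately show ?case using p(1) deriv.disjL by simp
next
  case (disjR1 N A1 A2)
  have "rf xi Pi (Disj A1 A2)" using disjR1.prems(2) disjR1.hyps unfolding rf_def by simp
  moreover have "deriv (Meta xi Pi) (Disj A1 A2)" using deriv.disjR1[OF disjR1.hyps] disjR1.prems(2) by simp
  ultimately show ?case by (rule right_principal[OF disjR1.prems(1) _ _ disjR1.prems(3) disjR1.prems(4)])
next
  case (disjR2 N A2 A1)
  have "rf xi Pi (Disj A1 A2)" using disjR2.prems(2) disjR2.hyps unfolding rf_def by simp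
  moreover have "deriv (Meta xi Pi) (Disj A1 A2)" using deriv.disjR2[OF disjR2.hyps] disjR2.prems(2) by simp
  ultimately show ?case by (rule right_principal[OF disjR2.prems(1) _ _ disjR2.prems(3) disjR2.prems(4)])
next
  case (conjL1 X z D1 A1 D2 F0 A2)
  obtain Y e D1' D2' where p: "M' = fill Y (Meta (e+z) (D1'@[TF (Conj A1 A2)]@D2'))"
    "\<forall>wx Sx xi0 Pi0. Meta xi0 Pi0 = fill X (Meta wx (D1@Sx@D2)) \<longrightarrow> replM F0 xi0 Pi0 M (fill Y (Meta (e+wx) (D1'@Sx@D2')))"
    using plug[OF conjL1.prems(4) conjL1.prems(2)[symmetric]] by blast
  obtain xi0 Pi0 where q: "fill X (Meta z (D1@[TF A1]@D2)) = Meta xi0 Pi0" by (metis meta.exhaust)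
  have "deriv (fill Y (Meta (e+z) (D1'@[TF A1]@D2'))) C"
    using conjL1.IH[OF conjL1.prems(1) q conjL1.prems(3) p(2)[rule_format, OF q[symmetric]]] .
  then show ?case using p(1) deriv.conjL1 by simp
next
  case (conjL2 X z D1 A2 D2 F0 A1)
  obtain Y e D1' D2' where p: "M' = fill Y (Meta (e+z) (D1'@[TF (Conj A1 A2)]@D2'))"
    "\<forall>wx Sx xi0 Pi0. Meta xi0 Pi0 = fill X (Meta wx (D1@Sx@D2)) \<longrightarrow> replM F0 xi0 Pi0 M (fill Y (Meta (e+wx) (D1'@Sx@D2')))"
    using plug[OF conjL2.prems(4) conjL2.prems(2)[symmetric]] by blast
  obtain xi0 Pi0 where q: "fill X (Meta z (D1@[TF A2]@D2)) = Meta xi0 Pi0" by (metis meta.exhaust)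
  have "deriv (fill Y (Meta (e+z) (D1'@[TF A2]@D2'))) C"
    using conjL2.IH[OF conjL2.prems(1) q conjL2.prems(3) p(2)[rule_format, OF q[symmetric]]] .
  then show ?case using p(1) deriv.conjL2 by simp
next
  case (conjR N A1 A2)
  have "rf xi Pi (Conj A1 A2)" using conjR.prems(2) conjR.hyps unfolding rf_def by simp
  moreover have "deriv (Meta xi Pi) (Conj A1 A2)" using deriv.conjR[OF conjR.hyps] conjR.prems(2) by simp
  ultimately show ?case by (rule right_principal[OF conjR.prems(1) _ _ conjR.prems(3) conjR.prems(4)])
next
  case (boxinvL X z D1 A D2 F0)
  obtain Y e D1' D2' where p: "M' = fill Y (Meta (e+z) (D1'@[Br (Meta {#} [TF (BoxInv A)])]@D2'))"
    "\<forall>wx Sx xi0 Pi0. Meta xi0 Pi0 = fill X (Meta wx (D1@Sx@D2)) \<longrightarrow> replM F0 xi0 Pi0 M (fill Y (Meta (e+wx) (D1'@Sx@D2')))"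
    using plug[OF boxinvL.prems(4) boxinvL.prems(2)[symmetric]] by blast
  obtain xi0 Pi0 where q: "fill X (Meta z (D1@[TF A]@D2)) = Meta xi0 Pi0" by (metis meta.exhaust)
  have "deriv (fill Y (Meta (e+z) (D1'@[TF A]@D2'))) C"
    using boxinvL.IH[OF boxinvL.prems(1) q boxinvL.prems(3) p(2)[rule_format, OF q[symmetric]]] .
  then show ?case using p(1) deriv.boxinvL by simp
next
  case (boxinvR N A)
  have "rf xi Pi (BoxInv A)" using boxinvR.prems(2) boxinvR.hyps unfolding rf_def by simp
  moreover have "deriv (Meta xi Pi) (BoxInv A)" using deriv.boxinvR[OF boxinvR.hyps] boxinvR.prems(2) by simp
  ultimately show ?case by (rule right_principal[OF boxinvR.prems(1) _ _ boxinvR.prems(3) boxinvR.prems(4)])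
next
  case (diamL X z D1 A D2 F0)
  obtain Y e D1' D2' where p: "M' = fill Y (Meta (e+z) (D1'@[TF (Diam A)]@D2'))"
    "\<forall>wx Sx xi0 Pi0. Meta xi0 Pi0 = fill X (Meta wx (D1@Sx@D2)) \<longrightarrow> replM F0 xi0 Pi0 M (fill Y (Meta (e+wx) (D1'@Sx@D2')))"
    using plug[OF diamL.prems(4) diamL.prems(2)[symmetric]] by blast
  obtain xi0 Pi0 where q: "fill X (Meta z (D1@[Br (Meta {#} [TF A])]@D2)) = Meta xi0 Pi0" by (metis meta.exhaust)
  have "deriv (fill Y (Meta (e+z) (D1'@[Br (Meta {#} [TF A])]@D2'))) C"
    using diamL.IH[OF diamL.prems(1) q diamL.prems(3) p(2)[rule_format, OF q[symmetric]]] .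
  then show ?case using p(1) deriv.diamL by simp
next
  case (diamR N A)
  have "rf xi Pi (Diam A)" using diamR.prems(2) diamR.hyps unfolding rf_def by auto
  moreover have "deriv (Meta xi Pi) (Diam A)" using deriv.diamR[OF diamR.hyps] diamR.prems(2) by simp
  ultimately show ?case by (rule right_principal[OF diamR.prems(1) _ _ diamR.prems(3) diamR.prems(4)])
next
  case (bangL X z A G1 G2 F0)
  obtain Y e D1' D2' where p: "M' = fill Y (Meta (e+z) (D1'@[TF (Bang A)]@D2'))"
    "\<forall>wx Sx xi0 Pi0. Meta xi0 Pi0 = fill X (Meta wx (G1@Sx@G2)) \<longrightarrow> replM F0 xi0 Pi0 M (fill Y (Meta (e+wx) (D1'@Sx@D2')))"
    using plug[OF bangL.prems(4) bangL.prems(2)[symmetric]] by blast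
  obtain xi0 Pi0 where q: "fill X (Meta (z + {#A#}) (G1@[]@G2)) = Meta xi0 Pi0" by (metis meta.exhaust)
  have "deriv (fill Y (Meta (e+(z + {#A#})) (D1'@[]@D2'))) C"
    using bangL.IH[OF bangL.prems(1) q[simplified append_Nil] bangL.prems(3) p(2)[rule_format, OF q[symmetric]]] .
  then have "deriv (fill Y (Meta ((e+z) + {#A#}) (D1'@D2'))) C" by (simp add: ac_simps)
  from deriv.bangL[OF this] show ?case using p(1) by simp
next
  case (bangP X z G1 A G2 F0)
  have eq: "Meta xi Pi = fill X (Meta (z + {#A#}) (G1 @ [] @ G2))" using bangP.prems(2) by simp
  obtain Y e D1' D2' where p: "M' = fill Y (Meta (e+(z + {#A#})) (D1'@[]@D2'))"
    "\<forall>wx Sx xi0 Pi0. Meta xi0 Pi0 = fill X (Meta wx (G1@Sx@G2)) \<longrightarrow> replM F0 xi0 Pi0 M (fill Y (Meta (e+wx) (D1'@Sx@D2')))"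
    using plug[OF bangP.prems(4) eq] by blast
  obtain xi0 Pi0 where q: "fill X (Meta z (G1@[TF A]@G2)) = Meta xi0 Pi0" by (metis meta.exhaust)
  have "deriv (fill Y (Meta (e+z) (D1'@[TF A]@D2'))) C"
    using bangP.IH[OF bangP.prems(1) q bangP.prems(3) p(2)[rule_format, OF q[symmetric]]] .
  from deriv.bangP[OF this] show ?case using p(1) by (simp add: ac_simps)
next
  case (bangR' z B)
  have "rf xi Pi (Bang B)" using bangR'.prems(2) bangR'.hyps unfolding rf_def by simp
  moreover have "deriv (Meta xi Pi) (Bang B)" using deriv.bangR'[OF bangR'.hyps] bangR'.prems(2) by simp
  ultimately show ?case by (rule right_principal[OF bangR'.prems(1) _ _ bangR'.prems(3) bangR'.prems(4)])
next
  case (bangC' X z1 z2 G1 z' G2 G3 F0)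
  have eq: "Meta xi Pi = fill X (Meta (z1 + z2 + z') ([] @ (G1 @ G2 @ G3) @ []))" using bangC'.prems(2) by simp
  obtain Y e D1' D2' where p: "M' = fill Y (Meta (e+(z1 + z2 + z')) (D1'@(G1 @ G2 @ G3)@D2'))"
    "\<forall>wx Sx xi0 Pi0. Meta xi0 Pi0 = fill X (Meta wx ([]@Sx@[])) \<longrightarrow> replM F0 xi0 Pi0 M (fill Y (Meta (e+wx) (D1'@Sx@D2')))"
    using plug[OF bangC'.prems(4) eq] by blast
  obtain xi0 Pi0 where q: "fill X (Meta (z1 + z2) (G1 @ [Br (Meta (z' + z2) G2)] @ G3)) = Meta xi0 Pi0" by (metis meta.exhaust)
  have q': "Meta xi0 Pi0 = fill X (Meta (z1 + z2) ([] @ (G1 @ [Br (Meta (z' + z2) G2)] @ G3) @ []))" using q by simp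
  have "deriv (fill Y (Meta (e+(z1 + z2)) (D1'@(G1 @ [Br (Meta (z' + z2) G2)] @ G3)@D2'))) C"
    using bangC'.IH[OF bangC'.prems(1) q bangC'.prems(3) p(2)[rule_format, OF q']] .
  then have "deriv (fill Y (Meta ((e+z1) + z2) ((D1'@G1) @ [Br (Meta (z' + z2) G2)] @ (G3@D2')))) C"
    by (simp add: ac_simps)
  from deriv.bangC'[OF this bangC'.hyps(2)] show ?case using p(1) by (simp add: ac_simps)
qed

lemma all_cut: "cutP A"
proof (induction A rule: measure_induct_rule[of size])
  case (less A)
  have sm: "\<forall>A'. size A' < size A \<longrightarrow> cutP A'" using less by blast
  show ?case unfolding cutP_def
    by (intro allI impI) (erule main_d1[OF _ sm refl], assumption+)
qed

theorem theorem2: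
  assumes "deriv (Meta xi Pi) A"
      and "deriv (fill X (Meta z (G1 @ [TF A] @ G2))) C"
  shows "deriv (fill X (Meta (xi + z) (G1 @ Pi @ G2))) C"
  using cut_at[OF all_cut assms] by simp


end
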